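(* Let $N, N', \nu, \nu'$ be integers with $N > N' > 0$ and $m := N\nu' - N'\nu > 0$. For parameters $s \ge 0$, $s' \ge 0$, $x_0 \in \mathbb{R}$, $t_0 \in \mathbb{R}$ define $$A = \sqrt{\tfrac{N-N'+s+s'}{N+s+s'}}\sqrt{\tfrac{(N+s')s'}{N'(N-N')+(N+s')s'}},\quad B = \sqrt{\tfrac{(N+s')s'}{N'(N-N')+(N+s')s'}}\sqrt{\tfrac{s}{N-N'+s}},\quad C = \sqrt{\tfrac{s}{N-N'+s}}\sqrt{\tfrac{N-N'+s+s'}{N+s+s'}},$$ $$\alpha_0 = \frac{N^2\nu' - (N')^2\nu}{m} - 2s - \frac{2N'(\nu'-\nu)}{m}s', \qquad \omega = \frac{2\pi}{T} = \frac{N'(N-N')(N+2s')}{m},$$ and the polynomial $P(z,\lambda) = z^N + A\lambda^{\nu'}z^{N-N'} + B\lambda^{\nu-\nu'}z^{N'} + C\lambda^{\nu}$. Then for every $\lambda$ with $|\lambda|=1$ all $N$ roots of $P(\cdot,\lambda)$ lie in the open unit disk, and, letting $\beta_1(t),\dots,\beta_N(t)$ be the roots of $z \mapsto P(z, e^{-i\omega t})$, $$u(x,t) = \alpha_0 + \sum_{l=1}^N u_{\beta_l(t-t_0)}(x-x_0)$$ is a solution of the Benjamin-Ono equation that is $2\pi$-periodic in $x$ and $T$-periodic in $t$. This gives a four-parameter family (parameters $s,s',x_0,t_0$) of time-periodic solutions connecting the traveling wave bifurcations $(N',\nu',N-1,m)$ and $(N,\nu,N-N',m)$: when $s'=0$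 the solution is an $N$-hump traveling wave (with speed index $\nu$ and period $T$), when $s=0$ it is an $N'$-hump traveling wave (with speed index $\nu'$ and period $T$), and when $s = s' = 0$ it is the constant solution $u(x,t) \equiv \frac{N^2\nu' - (N')^2\nu}{m}$.
   Context: The Benjamin-Ono equation is $u_t = Hu_{xx} - uu_x$, considered for $x \in \mathbb{R}/2\pi\mathbb{Z}$, where $H$ is the Hilbert transform with Fourier symbol $\hat H(k) = -i\,\mathrm{sgn}(k)$ (equivalently $Hf(x) = \frac{1}{\pi}\mathrm{PV}\int \frac{f(\xi)}{x-\xi}d\xi$). For $\beta$ in the open unit disk, writing $\beta = |\beta|e^{-i\theta}$, define $$u_\beta(x) = \frac{4|\beta|\{\cos(x-\theta) - |\beta|\}}{1 + |\beta|^2 - 2|\beta|\cos(x-\theta)},$$ whose Fourier coefficients are $2\beta^k$ for $k>0$, $0$ for $k=0$, $2\bar\beta^{|k|}$ for $k<0$ (so $u_0 \equiv 0$). For $\alpha_0 \in \mathbb{R}$, a positive integer $N$ and $\beta$ in the unit disk, the $N$-hump traveling wave is $u_{\alpha_0,N,\beta}(x,t) = \alpha_0 + \sum_{l=1}^N u_{\beta_l(t)}(x)$ with $\beta_l(t) = \sqrt[N]{\beta}\,e^{-ict}$ (the $\beta_l$ running over the $N$ distinct $N$th roots of $\beta$) and $c = \alpha_0 - N\frac{1-3|\beta|^2}{1-|\beta|^2}$; translates of it in $x$ and $t$ are also called $N$-hump traveling waves. Considered as a $T$-periodic solution, it has speed index $\nu \in \mathbb{Z}$ if $cT = 2\pi\nu/N$.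 Define $\omega_{N,n} = n(N-n)$ for $1 \le n \le N-1$ and $\omega_{N,n} = (n+1-N)\big[n+1+N\big(1 - \frac{1-3|\beta|^2}{1-|\beta|^2}\big)\big]$ for $n \ge N$. Such a traveling wave (with $N$ humps, speed index $\nu$, period $T$) is said to be at the bifurcation $(N,\nu,n,m)$ (with $n \ge 1$, $m\ge 1$ integers) if $\omega_{N,n}T = 2\pi m/N$ and $m \in n\nu + N\mathbb{Z}$ when $1 \le n < N$, respectively $m \in (n+1)\nu + N\mathbb{Z}$ when $n \ge N$; these are the values at which the linearization about the traveling wave admits non-trivial time-periodic solutions. *)

theory Defs
  imports "HOL-Analysis.Analysis" "HOL-Computational_Algebra.Polynomial"
begin

text \<open>The periodic profile u_beta(x), written exactly as in the paper with
  beta = |beta| e^{-i theta}, i.e. theta = - Arg beta.\<close>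
definition ubeta :: "complex \<Rightarrow> real \<Rightarrow> real" where
  "ubeta \<beta> x = (let r = cmod \<beta>; \<theta> = - Arg \<beta> in
     4 * r * (cos (x - \<theta>) - r) / (1 + r\<^sup>2 - 2 * r * cos (x - \<theta>)))"

definition fourier_coeff :: "(real \<Rightarrow> real) \<Rightarrow> int \<Rightarrow> complex" where
  "fourier_coeff f k =
     integral {0..2*pi} (\<lambda>x. complex_of_real (f x) * cis (- (of_int k * x))) / (2 * pi)"

definition hilbert_transform_of :: "(real \<Rightarrow> real) \<Rightarrow> (real \<Rightarrow> real) \<Rightarrow> bool" where
  "hilbert_transform_of f g \<longleftrightarrow>
     continuous_on UNIV f \<and> continuous_on UNIV g \<and>
     (\<forall>x. f (x + 2*pi) = f x) \<and> (\<forall>x. g (x + 2*pi) = g x) \<and>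
     (\<forall>k::int. fourier_coeff g k = - \<i> * of_int (sgn k) * fourier_coeff f k)"

text \<open>Classical solution of u_t = H u_xx - u u_x (u x t: space x, time t).\<close>
definition BO_solution :: "(real \<Rightarrow> real \<Rightarrow> real) \<Rightarrow> bool" where
  "BO_solution u \<longleftrightarrow>
     (\<forall>x t. (\<lambda>y. u y t) differentiable (at x) \<and>
            (\<lambda>y. deriv (\<lambda>z. u z t) y) differentiable (at x) \<and>
            (\<lambda>\<tau>. u x \<tau>) differentiable (at t)) \<and>
     (\<forall>t. hilbert_transform_of
            (\<lambda>x. deriv (\<lambda>y. deriv (\<lambda>z. u z t) y) x)
            (\<lambda>x. deriv (\<lambda>\<tau>. u x \<tau>) t + u x t * deriv (\<lambda>y. u y t) x))"

definition tw_speed :: "real \<Rightarrow> nat \<Rightarrow> complex \<Rightarrow> real" where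
  "tw_speed \<alpha>0 N \<beta> = \<alpha>0 - real N * (1 - 3 * (cmod \<beta>)\<^sup>2) / (1 - (cmod \<beta>)\<^sup>2)"

definition traveling_wave :: "real \<Rightarrow> nat \<Rightarrow> complex \<Rightarrow> real \<Rightarrow> real \<Rightarrow> real" where
  "traveling_wave \<alpha>0 N \<beta> x t =
     \<alpha>0 + (\<Sum>w\<in>{w. w ^ N = \<beta>}. ubeta (w * cis (- (tw_speed \<alpha>0 N \<beta> * t))) x)"

definition is_N_hump_tw :: "nat \<Rightarrow> int \<Rightarrow> real \<Rightarrow> (real \<Rightarrow> real \<Rightarrow> real) \<Rightarrow> bool" where
  "is_N_hump_tw N \<nu> T u \<longleftrightarrow>
     (\<exists>\<alpha>0 \<beta> x0 t0. cmod \<beta> < 1 \<and> tw_speed \<alpha>0 N \<beta> * T = 2 * pi * of_int \<nu> / real N \<and>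
        (\<forall>x t. u x t = traveling_wave \<alpha>0 N \<beta> (x - x0) (t - t0)))"

definition coefA :: "nat \<Rightarrow> nat \<Rightarrow> real \<Rightarrow> real \<Rightarrow> real" where
  "coefA N N' s s' =
     sqrt ((real N - real N' + s + s') / (real N + s + s')) *
     sqrt ((real N + s') * s' / (real N' * (real N - real N') + (real N + s') * s'))"

definition coefB :: "nat \<Rightarrow> nat \<Rightarrow> real \<Rightarrow> real \<Rightarrow> real" where
  "coefB N N' s s' =
     sqrt ((real N + s') * s' / (real N' * (real N - real N') + (real N + s') * s')) *
     sqrt (s / (real N - real N' + s))"

definition coefC :: "nat \<Rightarrow> nat \<Rightarrow> real \<Rightarrow> real \<Rightarrow> real" where
  "coefC N N' s s' =
     sqrt (s / (real N - real N' + s)) *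
     sqrt ((real N - real N' + s + s') / (real N + s + s'))"

definition BOpoly :: "nat \<Rightarrow> nat \<Rightarrow> int \<Rightarrow> int \<Rightarrow> real \<Rightarrow> real \<Rightarrow> complex \<Rightarrow> complex poly" where
  "BOpoly N N' \<nu> \<nu>' s s' lam =
     monom 1 N
     + monom (complex_of_real (coefA N N' s s') * lam powi \<nu>') (N - N')
     + monom (complex_of_real (coefB N N' s s') * lam powi (\<nu> - \<nu>')) N'
     + [: complex_of_real (coefC N N' s s') * lam powi \<nu> :]"

definition root_sum :: "complex poly \<Rightarrow> real \<Rightarrow> real" where
  "root_sum p x = (\<Sum>r\<in>{r. poly p r = 0}. real (order r p) * ubeta r x)"

end

theory Submission
  imports Defs "HOL-Complex_Analysis.Complex_Analysis" "HOL-Computational_Algebra.Fundamental_Theorem_Algebra"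
begin


lemma cmod_sq: "(cmod z)^2 = (Re z)^2 + (Im z)^2"
  by (simp add: cmod_def)

lemma key_nonzero:
  fixes p q r :: real and X Y :: complex
  assumes p: "0 \<le> p" "p < 1" and q: "0 \<le> q" "q < 1" and r: "0 \<le> r" "r < 1"
    and X: "cmod X \<le> 1" and Y: "cmod Y \<le> 1"
  shows "1 + of_real (p*q) * X + of_real (q*r) * Y + of_real (r*p) * X * Y \<noteq> 0"
proof
  assume h: "1 + of_real (p*q) * X + of_real (q*r) * Y + of_real (r*p) * X * Y = 0"
  have e: "1 + of_real (p*q) * X = - (of_real r * Y * (of_real q + of_real p * X))"
  proof -
    have "1 + of_real (p*q) * X + (of_real r * Y * (of_real q + of_real p * X)) = 0"
      using h by (simp add: algebra_simps)
    thus ?thesis by (simp add: eq_neg_iff_add_eq_0)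
  qed
  have "cmod (1 + of_real (p*q) * X) = r * cmod Y * cmod (of_real q + of_real p * X)"
    using e r by (simp add: norm_mult)
  also have "\<dots> \<le> r * cmod (of_real q + of_real p * X)"
  proof -
    have "cmod Y * cmod (of_real q + of_real p * X) \<le> cmod (of_real q + of_real p * X)"
      using Y by (intro mult_left_le_one_le) auto
    thus ?thesis using r by (simp add: mult.assoc mult_left_mono)
  qed
  also have "\<dots> \<le> cmod (of_real q + of_real p * X)"
    using r by (simp add: mult_left_le_one_le)
  finally have le: "cmod (1 + of_real (p*q) * X) \<le> cmod (of_real q + of_real p * X)" .
  have X2: "(Re X)^2 + (Im X)^2 \<le> 1" using X by (metis cmod_sq abs_norm_cancel power_le_one_iff norm_ge_zero)
  have "(cmod (1 + of_real (p*q) * X))^2 - (cmod (of_real q + of_real p * X))^2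
        = (1 - q^2) * (1 - p^2 * ((Re X)^2 + (Im X)^2))"
    unfolding cmod_sq by (simp add: power2_eq_square algebra_simps)
  moreover have "(1 - q^2) * (1 - p^2 * ((Re X)^2 + (Im X)^2)) > 0"
  proof -
    have "q^2 < 1" using q by (simp add: power_less_one_iff abs_square_less_1)
    moreover have "p^2 * ((Re X)^2 + (Im X)^2) < 1"
    proof -
      have "p^2 < 1" using p by (simp add: abs_square_less_1)
      moreover have "p^2 * ((Re X)^2 + (Im X)^2) \<le> p^2" using X2 by (simp add: mult_left_le)
      ultimately show ?thesis by linarith
    qed
    ultimately show ?thesis by simp
  qed
  ultimately have "(cmod (of_real q + of_real p * X))^2 < (cmod (1 + of_real (p*q) * X))^2" by linarith
  hence "cmod (of_real q + of_real p * X) < cmod (1 + of_real (p*q) * X)"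
    using power_less_imp_less_base by fastforce
  with le show False by linarith
qed


lemma logderiv_poly:
  fixes p :: "complex poly"
  shows "poly p z \<noteq> 0 \<Longrightarrow>
    poly (pderiv p) z / poly p z = (\<Sum>r\<in>{r. poly p r = 0}. of_nat (order r p) / (z - r))"
proof (induction p rule: poly_root_order_induct)
  case 0 then show ?case by simp
next
  case (no_roots p)
  have "degree p = 0"
    using no_roots fundamental_theorem_of_algebra constant_degree by blast
  hence "pderiv p = 0" by (simp add: pderiv_eq_0_iff)
  moreover have "{r. poly p r = 0} = {}" using no_roots by auto
  ultimately show ?case by simp
next
  case (root p x n)
  let ?q = "[:-x, 1:] ^ n * p"
  have pz: "poly p z \<noteq> 0" and zx: "z \<noteq> x" using root.prems root.hyps by auto
  have p0: "p \<noteq> 0" using root.hyps by auto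
  have fin: "finite {r. poly p r = 0}" using p0 poly_roots_finite by blast
  have *: "{r. poly ?q r = 0} = insert x {r. poly p r = 0}"
    using root.hyps by auto
  have ox: "order x ?q = n"
    using root.hyps by (subst order_mult) (auto simp: order_power_n_n order_0I)
  have oy: "order y ?q = order y p" if "poly p y = 0" for y
  proof -
    have "y \<noteq> x" using that root.hyps by auto
    hence "order y ([:-x,1:] ^ n) = 0" by (intro order_0I) auto
    thus ?thesis using p0 root.hyps by (subst order_mult) auto
  qed
  have D: "poly (pderiv ?q) z = of_nat n * (z - x) ^ (n - 1) * poly p z + (z - x) ^ n * poly (pderiv p) z"
    by (simp add: pderiv_mult pderiv_power pderiv_pCons algebra_simps)
  have Q: "poly ?q z = (z - x) ^ n * poly p z" by simp
  obtain k where k: "n = Suc k" using root.hyps(1) by (cases n) auto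
  have aux: "(of_nat (Suc k) * w^k * a + w^(Suc k) * b)/(w^(Suc k) * a) = of_nat (Suc k)/w + b/a"
    if "a \<noteq> 0" "w \<noteq> 0" for a b w :: complex
    using that by (simp add: field_simps)
  have "poly (pderiv ?q) z / poly ?q z = (of_nat n * (z - x) ^ (n - 1) * poly p z + (z - x) ^ n * poly (pderiv p) z) / ((z - x) ^ n * poly p z)"
    by (simp only: D Q)
  also have "\<dots> = of_nat n / (z - x) + poly (pderiv p) z / poly p z"
    using aux[of "poly p z" "z - x" "poly (pderiv p) z"] pz zx by (simp add: k)
  also have "\<dots> = of_nat (order x ?q) / (z - x) + (\<Sum>r\<in>{r. poly p r = 0}. of_nat (order r ?q) / (z - r))"
    using root.IH pz ox oy by simp
  also have "\<dots> = (\<Sum>r\<in>{r. poly ?q r = 0}. of_nat (order r ?q) / (z - r))"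
    unfolding * using fin root.hyps by (subst sum.insert) auto
  finally show ?case .
qed

lemma sum_order_degree:
  fixes p :: "complex poly"
  shows "(\<Sum>r\<in>{r. poly p r = 0}. order r p) = degree p"
proof (induction p rule: poly_root_order_induct)
  case 0 then show ?case by (simp add: infinite_UNIV_char_0)
next
  case (no_roots p)
  have "degree p = 0"
    using no_roots fundamental_theorem_of_algebra constant_degree by blast
  moreover have "{r. poly p r = 0} = {}" using no_roots by auto
  ultimately show ?case by simp
next
  case (root p x n)
  let ?q = "[:-x, 1:] ^ n * p"
  have p0: "p \<noteq> 0" using root.hyps by auto
  have fin: "finite {r. poly p r = 0}" using p0 poly_roots_finite by blast
  have *: "{r. poly ?q r = 0} = insert x {r. poly p r = 0}"
    using root.hyps by auto
  have ox: "order x ?q = n"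
    using root.hyps by (subst order_mult) (auto simp: order_power_n_n order_0I)
  have oy: "order y ?q = order y p" if "poly p y = 0" for y
  proof -
    have "y \<noteq> x" using that root.hyps by auto
    hence "order y ([:-x,1:] ^ n) = 0" by (intro order_0I) auto
    thus ?thesis using p0 root.hyps by (subst order_mult) auto
  qed
  have "(\<Sum>r\<in>{r. poly ?q r = 0}. order r ?q) = n + (\<Sum>r\<in>{r. poly p r = 0}. order r ?q)"
    unfolding * using fin root.hyps ox by (subst sum.insert) auto
  also have "\<dots> = n + degree p" using oy root.IH by simp
  also have "\<dots> = degree ?q" using p0 by (simp add: degree_mult_eq degree_power_eq)
  finally show ?case .
qed


lemma re_frac_aux:
  fixes r cc ss :: real
  assumes "cc^2 + ss^2 = 1" "0 \<le> r" "r < 1"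
  shows "Re (Complex (r * cc) (r * ss) / (1 - Complex (r * cc) (r * ss))) = (r * cc - r^2) / (1 + r^2 - 2*r * cc)"
proof -
  have "Re (Complex (r * cc) (r * ss) / (1 - Complex (r * cc) (r * ss)))
      = (r * cc * (1 - r * cc) - (r * ss) * (r * ss)) / ((1 - r * cc)^2 + (r * ss)^2)"
    by (simp add: Re_divide power2_eq_square)
  also have "r * cc * (1 - r * cc) - (r * ss) * (r * ss) = r * cc - r^2 * (cc^2 + ss^2)"
    by (simp add: power2_eq_square algebra_simps)
  also have "(1 - r * cc)^2 + (r * ss)^2 = 1 + r^2 * (cc^2 + ss^2) - 2 * r * cc"
    by (simp add: power2_eq_square algebra_simps)
  finally show ?thesis using assms(1) by simp
qed

lemma ubeta_closed:
  assumes "cmod \<beta> < 1"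
  shows "ubeta \<beta> x = 4 * Re (\<beta> * cis x / (1 - \<beta> * cis x))"
proof (cases "\<beta> = 0")
  case True then show ?thesis by (simp add: ubeta_def)
next
  case False
  define r where "r = cmod \<beta>"
  define a where "a = Arg \<beta>"
  have b: "\<beta> * cis x = Complex (r * cos (x + a)) (r * sin (x + a))"
  proof -
    have "\<beta> = of_real r * cis a" unfolding r_def a_def by (metis rcis_cmod_Arg rcis_def)
    hence "\<beta> * cis x = of_real r * cis (x + a)" by (simp add: cis_mult add.commute)
    thus ?thesis by (simp add: complex_eq_iff cis.sel)
  qed
  have "Re (\<beta> * cis x / (1 - \<beta> * cis x)) = (r * cos (x + a) - r^2) / (1 + r^2 - 2*r*cos (x + a))"
    unfolding b by (rule re_frac_aux) (use assms in \<open>auto simp: r_def\<close>)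
  thus ?thesis unfolding ubeta_def Let_def r_def[symmetric] a_def[symmetric]
    by (simp add: algebra_simps power2_eq_square)
qed


lemma bil0_alg:
  fixes k1 k2 O1 O2 a0 A B C X Y :: complex
  assumes X: "X \<noteq> 0" and Y: "Y \<noteq> 0"
  defines "k3 \<equiv> k1 + k2" and "O3 \<equiv> O1 + O2"
  defines "\<kappa> \<equiv> O3 - a0*k3 + k3^2"
  defines "Q \<equiv> \<lambda>k om. om - a0*k + k^2"
  defines "a \<equiv> 1 + A*X + B*Y + C*X*Y" and "Sg \<equiv> 1 + A/X + B/Y + C/(X*Y)"
  defines "Pk \<equiv> \<lambda>j::nat. k1^j*A*X + k2^j*B*Y + k3^j*C*X*Y"
  defines "Pk' \<equiv> \<lambda>j::nat. k1^j*A/X + k2^j*B/Y + k3^j*C/(X*Y)"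
  defines "PO \<equiv> O1*A*X + O2*B*Y + O3*C*X*Y" and "PO' \<equiv> O1*A/X + O2*B/Y + O3*C/(X*Y)"
  shows "PO*Sg + a*PO' - a0*(Pk 1*Sg + a*Pk' 1) + Pk 2*Sg + 2*Pk 1*Pk' 1 + a*Pk' 2 - \<kappa>*a*Sg
     = (-\<kappa> + A^2*(Q (2*k1) (2*O1) - \<kappa>) + B^2*(Q (2*k2) (2*O2) - \<kappa>) + C^2*(Q (2*k3) (2*O3) - \<kappa>))
       + (A*(Q k1 O1 - \<kappa>) + B*C*(Q (k3+k2) (O3+O2) - \<kappa>)) * (X + 1/X)
       + (B*(Q k2 O2 - \<kappa>) + A*C*(Q (k3+k1) (O3+O1) - \<kappa>)) * (Y + 1/Y)"
  using X Y unfolding a_def Sg_def Pk_def Pk'_def PO_def PO'_def \<kappa>_def Q_def k3_def O3_def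
  by (simp add: field_simps) (simp add: algebra_simps power2_eq_square)


lemma bil1_alg:
  fixes k1 k2 O1 O2 a0 A B C X Y :: complex
  assumes X: "X \<noteq> 0" and Y: "Y \<noteq> 0"
  defines "k3 \<equiv> k1 + k2" and "O3 \<equiv> O1 + O2"
  defines "\<kappa> \<equiv> O3 - a0*k3 + k3^2"
  defines "Q \<equiv> \<lambda>k om. om - a0*k + k^2"
  defines "a \<equiv> 1 + A*X + B*Y + C*X*Y" and "Sg \<equiv> 1 + A/X + B/Y + C/(X*Y)"
  defines "Pk \<equiv> \<lambda>j::nat. k1^j*A*X + k2^j*B*Y + k3^j*C*X*Y"
  defines "Pk' \<equiv> \<lambda>j::nat. k1^j*A/X + k2^j*B/Y + k3^j*C/(X*Y)"
  defines "PO \<equiv> O1*A*X + O2*B*Y + O3*C*X*Y" and "PO' \<equiv> O1*A/X + O2*B/Y + O3*C/(X*Y)"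
  defines "PkO \<equiv> k1*O1*A*X + k2*O2*B*Y + k3*O3*C*X*Y" and "PkO' \<equiv> k1*O1*A/X + k2*O2*B/Y + k3*O3*C/(X*Y)"
  shows "(PkO*Sg - PO*Pk' 1 + Pk 1*PO' - a*PkO' - a0*Pk 2*Sg + a0*a*Pk' 2 + Pk 3*Sg + Pk 2*Pk' 1 - Pk 1*Pk' 2 - a*Pk' 3)
          - \<kappa>*(Pk 1*Sg - a*Pk' 1)
     = k1*(A*(Q k1 O1 - \<kappa>) + B*C*(Q (k3+k2) (O3+O2) - \<kappa>)) * (X - 1/X)
       + k2*(B*(Q k2 O2 - \<kappa>) + A*C*(Q (k3+k1) (O3+O1) - \<kappa>)) * (Y - 1/Y)"
  using X Y unfolding a_def Sg_def Pk_def Pk'_def PO_def PO'_def PkO_def PkO'_def \<kappa>_def Q_def k3_def O3_def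
  by (simp add: field_simps) (simp add: algebra_simps power2_eq_square power3_eq_cube)


lemma fourier_vanish:
  assumes hol: "W holomorphic_on ball 0 \<rho>" and \<rho>: "1 < \<rho>" and W0: "W 0 = 0"
  shows "((\<lambda>x. W (cis x) * cis (real n * x)) has_integral 0) {0..2*pi}"
proof -
  define V where "V = (\<lambda>z. if z = 0 then deriv W 0 else (W z - W 0) / (z - 0))"
  have Vh: "V holomorphic_on ball 0 \<rho>"
    unfolding V_def by (rule pole_lemma[OF hol]) (use \<rho> in auto)
  have VW: "V z * z = W z" for z
    by (cases "z = 0") (auto simp: V_def W0)
  define g where "g = (\<lambda>z. V z * z ^ n / \<i>)"
  have gh: "g holomorphic_on ball 0 \<rho>"
    unfolding g_def by (intro holomorphic_intros Vh) auto
  have path: "path_image (part_circlepath 0 1 0 (2*pi)) \<subseteq> ball 0 \<rho>"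
    using path_image_part_circlepath_subset[of 0 "2*pi" 1 0] \<rho> by (auto simp: sphere_def)
  have "(g has_contour_integral 0) (part_circlepath 0 1 0 (2*pi))"
    by (rule Cauchy_theorem_convex_simple[OF gh convex_ball valid_path_part_circlepath path])
       (simp add: exp_two_pi_i' mult.commute)
  hence "((\<lambda>t. g (0 + 1 * cis t) * 1 * \<i> * cis t) has_integral 0) {0..2*pi}"
    by (subst (asm) has_contour_integral_part_circlepath_iff) auto
  moreover have "g (0 + 1 * cis t) * 1 * \<i> * cis t = W (cis t) * cis (real n * t)" for t
  proof -
    have "g (cis t) * \<i> * cis t = V (cis t) * cis t * cis t ^ n"
      by (simp add: g_def mult.commute mult.left_commute)
    also have "\<dots> = W (cis t) * cis (real n * t)" using Complex.DeMoivre[of t n] by (simp add: VW)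
    finally show ?thesis by simp
  qed
  ultimately show ?thesis by simp
qed


lemma hilbert_from_holo:
  assumes hol: "W holomorphic_on ball 0 \<rho>" and \<rho>: "1 < \<rho>" and W0: "W 0 = 0"
  shows "hilbert_transform_of (\<lambda>x. - 4 * Im (W (cis (x - x0)))) (\<lambda>x. 4 * Re (W (cis (x - x0))))"
proof -
  define W1 where "W1 = (\<lambda>z. W (z * cis (- x0)))"
  have W1x: "W (cis (x - x0)) = W1 (cis x)" for x
    by (simp add: W1_def cis_mult)
  have sub: "(\<lambda>z. z * cis (- x0)) ` ball 0 \<rho> \<subseteq> ball 0 \<rho>"
    by (auto simp: norm_mult)
  have hol1: "W1 holomorphic_on ball 0 \<rho>"
    using holomorphic_on_compose_gen[of "\<lambda>z. z * cis (- x0)" "ball 0 \<rho>" W "ball 0 \<rho>"] hol sub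
    unfolding W1_def o_def
  proof -
    have "(\<lambda>z. z * cis (- x0)) holomorphic_on ball 0 \<rho>" by (intro holomorphic_intros)
    thus "(\<lambda>z. W (z * cis (- x0))) holomorphic_on ball 0 \<rho>"
      using holomorphic_on_compose_gen[of "\<lambda>z. z * cis (- x0)" "ball 0 \<rho>" W "ball 0 \<rho>"] hol sub
      unfolding o_def by blast
  qed
  have W10: "W1 0 = 0" by (simp add: W1_def W0)
  have cont1: "continuous_on (ball 0 \<rho>) W1"
    using hol1 holomorphic_on_imp_continuous_on by blast
  have contw: "continuous_on UNIV (\<lambda>x. W1 (cis x))"
    by (rule continuous_on_compose2[OF cont1]) (auto intro!: continuous_intros simp: \<rho>)
  have contf: "continuous_on UNIV (\<lambda>x. - 4 * Im (W (cis (x - x0))))"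
    unfolding W1x by (intro continuous_intros contw)
  have contg: "continuous_on UNIV (\<lambda>x. 4 * Re (W (cis (x - x0))))"
    unfolding W1x by (intro continuous_intros contw)
  have per: "cis (x + 2 * pi - x0) = cis (x - x0)" for x
    by (metis add.commute add_diff_eq cis_2pi cis_mult mult_1)
  define Ip where "Ip = (\<lambda>k::int. integral {0..2*pi} (\<lambda>x. W1 (cis x) * cis (- (of_int k * x))))"
  define Im' where "Im' = (\<lambda>k::int. integral {0..2*pi} (\<lambda>x. cnj (W1 (cis x)) * cis (- (of_int k * x))))"
  have int1: "(\<lambda>x. W1 (cis x) * cis (- (of_int k * x))) integrable_on {0..2*pi}" for k :: int
    by (rule integrable_continuous_interval)
       (intro continuous_intros continuous_on_subset[OF contw], auto)
  have int2: "(\<lambda>x. cnj (W1 (cis x)) * cis (- (of_int k * x))) integrable_on {0..2*pi}" for k :: int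
    by (rule integrable_continuous_interval)
       (intro continuous_intros continuous_on_subset[OF contw], auto)
  have Ip0: "Ip k = 0" if "k \<le> 0" for k :: int
  proof -
    have "((\<lambda>x. W1 (cis x) * cis (real (nat (-k)) * x)) has_integral 0) {0..2*pi}"
      by (rule fourier_vanish[OF hol1 \<rho> W10])
    moreover have "real (nat (-k)) = - of_int k" using that by simp
    ultimately show ?thesis unfolding Ip_def by (simp add: integral_unique)
  qed
  have Im0: "Im' k = 0" if "k \<ge> 0" for k :: int
  proof -
    have "Im' k = cnj (Ip (-k))"
      unfolding Im'_def Ip_def integral_cnj by (simp add: cis_cnj)
    thus ?thesis using Ip0[of "-k"] that by simp
  qed
  have fc_f: "fourier_coeff (\<lambda>x. - 4 * Im (W (cis (x - x0)))) k = 2 * \<i> * (Ip k - Im' k) / (2 * pi)" for k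
  proof -
    have e: "complex_of_real (- 4 * Im (W (cis (x - x0)))) * cis (- (of_int k * x))
        = 2 * \<i> * (W1 (cis x) * cis (- (of_int k * x))) - 2 * \<i> * (cnj (W1 (cis x)) * cis (- (of_int k * x)))" for x
      unfolding W1x by (simp add: complex_eq_iff algebra_simps)
    have "((\<lambda>x. 2 * \<i> * (W1 (cis x) * cis (- (of_int k * x))) - 2 * \<i> * (cnj (W1 (cis x)) * cis (- (of_int k * x))))
        has_integral (2 * \<i> * Ip k - 2 * \<i> * Im' k)) {0..2*pi}"
      unfolding Ip_def Im'_def
      by (intro has_integral_diff has_integral_mult_right integrable_integral int1 int2)
    then show ?thesis unfolding fourier_coeff_def e
      by (simp add: integral_unique algebra_simps)
  qed
  have fc_g: "fourier_coeff (\<lambda>x. 4 * Re (W (cis (x - x0)))) k = 2 * (Ip k + Im' k) / (2 * pi)" for k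
  proof -
    have e: "complex_of_real (4 * Re (W (cis (x - x0)))) * cis (- (of_int k * x))
        = 2 * (W1 (cis x) * cis (- (of_int k * x))) + 2 * (cnj (W1 (cis x)) * cis (- (of_int k * x)))" for x
      unfolding W1x by (simp add: complex_eq_iff algebra_simps)
    have "((\<lambda>x. 2 * (W1 (cis x) * cis (- (of_int k * x))) + 2 * (cnj (W1 (cis x)) * cis (- (of_int k * x))))
        has_integral (2 * Ip k + 2 * Im' k)) {0..2*pi}"
      unfolding Ip_def Im'_def
      by (intro has_integral_add has_integral_mult_right integrable_integral int1 int2)
    then show ?thesis unfolding fourier_coeff_def e
      by (simp add: integral_unique algebra_simps)
  qed
  show ?thesis unfolding hilbert_transform_of_def
  proof (intro conjI allI contf contg)
    fix x show "- 4 * Im (W (cis (x + 2 * pi - x0))) = - 4 * Im (W (cis (x - x0)))" by (simp add: per)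
  next
    fix x show "4 * Re (W (cis (x + 2 * pi - x0))) = 4 * Re (W (cis (x - x0)))" by (simp add: per)
  next
    fix k :: int
    consider "k > 0" | "k = 0" | "k < 0" by linarith
    thus "fourier_coeff (\<lambda>x. 4 * Re (W (cis (x - x0)))) k =
          - \<i> * of_int (sgn k) * fourier_coeff (\<lambda>x. - 4 * Im (W (cis (x - x0)))) k"
    proof cases
      case 1 thus ?thesis unfolding fc_f fc_g using Im0[of k] by (simp add: field_simps)
    next
      case 2 thus ?thesis unfolding fc_f fc_g using Im0[of k] Ip0[of k] by simp
    next
      case 3 thus ?thesis unfolding fc_f fc_g using Ip0[of k] by (simp add: field_simps)
    qed
  qed
qed


locale bo =
  fixes N N' :: nat and \<nu> \<nu>' :: int and s s' x0 t0 :: real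
  assumes NN: "N' < N" "0 < N'" and ss: "0 \<le> s" "0 \<le> s'" and mpos: "int N * \<nu>' - int N' * \<nu> > 0"
begin

definition "mm = real_of_int (int N * \<nu>' - int N' * \<nu>)"
definition "\<omega> = real N' * (real N - real N') * (real N + 2 * s') / mm"
definition "\<alpha>0 = (real N ^ 2 * of_int \<nu>' - real N' ^ 2 * of_int \<nu>) / mm - 2 * s
                 - 2 * real N' * of_int (\<nu>' - \<nu>) / mm * s'"
definition "P2 = (real N - real N' + s + s') / (real N + s + s')"
definition "Q2 = (real N + s') * s' / (real N' * (real N - real N') + (real N + s') * s')"
definition "R2 = s / (real N - real N' + s)"
definition "pp = sqrt P2"
definition "qq = sqrt Q2"
definition "rr = sqrt R2"
abbreviation "A \<equiv> coefA N N' s s'"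
abbreviation "B \<equiv> coefB N N' s s'"
abbreviation "C \<equiv> coefC N N' s s'"

lemma mm_pos: "mm > 0" unfolding mm_def by (rule of_int_pos[OF mpos])

lemma P2_bnd: "0 \<le> P2" "P2 < 1"
  using NN ss by (auto simp: P2_def field_simps)
lemma Q2_bnd: "0 \<le> Q2" "Q2 < 1"
proof -
  have d: "real N' * (real N - real N') > 0" using NN by simp
  have n: "0 \<le> (real N + s') * s'" using ss by simp
  show "0 \<le> Q2" unfolding Q2_def using d n by simp
  show "Q2 < 1" unfolding Q2_def using d n by (simp add: divide_less_eq)
qed
lemma R2_bnd: "0 \<le> R2" "R2 < 1"
  using NN ss by (auto simp: R2_def field_simps)

lemma pqr_bnd: "0 \<le> pp" "pp < 1" "0 \<le> qq" "qq < 1" "0 \<le> rr" "rr < 1"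
  using P2_bnd Q2_bnd R2_bnd by (auto simp: pp_def qq_def rr_def)

lemma A_eq: "A = pp * qq" by (simp add: coefA_def pp_def qq_def P2_def Q2_def)
lemma B_eq: "B = qq * rr" by (simp add: coefB_def qq_def rr_def R2_def Q2_def)
lemma C_eq: "C = rr * pp" by (simp add: coefC_def pp_def rr_def P2_def R2_def)

lemma tau_nonzero:
  assumes "cmod X \<le> 1" "cmod Y \<le> 1"
  shows "1 + of_real A * X + of_real B * Y + of_real C * X * Y \<noteq> 0"
  using key_nonzero[OF pqr_bnd assms] unfolding A_eq B_eq C_eq by simp

lemma roots_inside:
  assumes lam: "cmod lam = 1" and z: "poly (BOpoly N N' \<nu> \<nu>' s s' lam) z = 0"
  shows "cmod z < 1"
proof (rule ccontr)
  assume "\<not> cmod z < 1"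
  hence z1: "cmod z \<ge> 1" by simp
  hence z0: "z \<noteq> 0" by auto
  have l0: "lam \<noteq> 0" using lam by auto
  define X where "X = lam powi \<nu>' * inverse z ^ N'"
  define Y where "Y = lam powi (\<nu> - \<nu>') * inverse z ^ (N - N')"
  have nX: "cmod X \<le> 1" unfolding X_def using lam z1
    by (simp add: norm_mult norm_power_int norm_power norm_inverse power_le_one inverse_le_1_iff)
  have nY: "cmod Y \<le> 1" unfolding Y_def using lam z1
    by (simp add: norm_mult norm_power_int norm_power norm_inverse power_le_one inverse_le_1_iff)
  have XY: "X * Y = lam powi \<nu> * inverse z ^ N"
  proof -
    have "lam powi \<nu>' * lam powi (\<nu> - \<nu>') = lam powi \<nu>" using l0 by (simp add: power_int_add[symmetric])
    moreover have "inverse z ^ N' * inverse z ^ (N - N') = inverse z ^ N"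
      using NN by (simp add: power_add[symmetric])
    ultimately show ?thesis unfolding X_def Y_def by (simp add: algebra_simps)
  qed
  have "poly (BOpoly N N' \<nu> \<nu>' s s' lam) z = z ^ N * (1 + of_real A * X + of_real B * Y + of_real C * X * Y)"
  proof -
    have e1: "z ^ N * inverse z ^ N' = z ^ (N - N')"
      using NN z0 by (simp add: power_diff field_simps)
    have e2: "z ^ N * inverse z ^ (N - N') = z ^ N'"
      using NN z0 by (simp add: power_diff field_simps)
    have e3: "z ^ N * inverse z ^ N = 1" using z0 by (simp add: field_simps)
    have t1: "complex_of_real A * lam powi \<nu>' * z ^ (N - N') = z ^ N * (of_real A * X)"
      unfolding X_def e1[symmetric] by (simp add: algebra_simps)
    have t2: "complex_of_real B * lam powi (\<nu> - \<nu>') * z ^ N' = z ^ N * (of_real B * Y)"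
      unfolding Y_def e2[symmetric] by (simp add: algebra_simps)
    have t3: "complex_of_real C * lam powi \<nu> = z ^ N * (of_real C * X * Y)"
      unfolding mult.assoc XY using e3 by (simp add: algebra_simps)
    show ?thesis unfolding BOpoly_def
      by (simp add: poly_monom t1 t2 t3 distrib_left)
  qed
  with z z0 tau_nonzero[OF nX nY] show False by simp
qed

end


context bo begin

definition "k1 = real N'"
definition "k2 = real N - real N'"
definition "k3 = real N"
definition "O1 = of_int \<nu>' * \<omega>"
definition "O2 = of_int (\<nu> - \<nu>') * \<omega>"
definition "O3 = of_int \<nu> * \<omega>"

definition Ec :: "real \<Rightarrow> real \<Rightarrow> complex \<Rightarrow> complex \<Rightarrow> complex" where
  "Ec k om w v = exp (\<i> * (of_real k * (w - of_real x0) - of_real om * (v - of_real t0)))"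

definition Pg :: "nat \<Rightarrow> nat \<Rightarrow> complex \<Rightarrow> complex \<Rightarrow> complex" where
  "Pg j l w v = of_real (k1^j * O1^l * A) * Ec k1 O1 w v + of_real (k2^j * O2^l * B) * Ec k2 O2 w v
              + of_real (k3^j * O3^l * C) * Ec k3 O3 w v"

definition "ac w v = 1 + Pg 0 0 w v"

lemma k3_eq: "k3 = k1 + k2" using NN by (simp add: k1_def k2_def k3_def)
lemma O3_eq: "O3 = O1 + O2" by (simp add: O1_def O2_def O3_def algebra_simps)

lemma Ec_real: "Ec k om (of_real x) (of_real t) = cis (k * (x - x0) - om * (t - t0))"
  by (simp add: Ec_def cis_conv_exp)

lemma Ec3: "Ec k3 O3 w v = Ec k1 O1 w v * Ec k2 O2 w v"
  unfolding Ec_def k3_eq O3_eq by (simp add: exp_add[symmetric] algebra_simps)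

lemma norm_Ec_real: "cmod (Ec k om (of_real x) (of_real t)) = 1"
  by (simp add: Ec_real)

lemma ac_nonzero_real: "ac (of_real x) (of_real t) \<noteq> 0"
proof -
  have "ac (of_real x) (of_real t) = 1 + of_real A * Ec k1 O1 (of_real x) (of_real t) + of_real B * Ec k2 O2 (of_real x) (of_real t)
          + of_real C * Ec k1 O1 (of_real x) (of_real t) * Ec k2 O2 (of_real x) (of_real t)"
    by (simp add: ac_def Pg_def Ec3 algebra_simps)
  thus ?thesis using tau_nonzero norm_Ec_real by (metis order_refl)
qed

lemma degree_BOpoly: "degree (BOpoly N N' \<nu> \<nu>' s s' lam) = N"
proof (rule antisym)
  show "degree (BOpoly N N' \<nu> \<nu>' s s' lam) \<le> N"
    by (rule degree_le) (use NN in \<open>auto simp: BOpoly_def coeff_monom coeff_pCons split: nat.splits\<close>)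
  show "N \<le> degree (BOpoly N N' \<nu> \<nu>' s s' lam)"
    by (rule le_degree) (use NN in \<open>auto simp: BOpoly_def coeff_monom coeff_pCons split: nat.splits\<close>)
qed

lemma root_sum_closed:
  fixes x t :: real
  shows "root_sum (BOpoly N N' \<nu> \<nu>' s s' (cis (- (\<omega> * (t - t0))))) (x - x0)
       = - 4 * Re (Pg 1 0 (of_real x) (of_real t) / ac (of_real x) (of_real t))"
proof -
  define lam where "lam = cis (- (\<omega> * (t - t0)))"
  define P where "P = BOpoly N N' \<nu> \<nu>' s s' lam"
  define y where "y = x - x0"
  define q where "q = cis y"
  define \<zeta> where "\<zeta> = cis (- y)"
  define X where "X = Ec k1 O1 (of_real x) (of_real t)"
  define Y where "Y = Ec k2 O2 (of_real x) (of_real t)"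
  have lam1: "cmod lam = 1" by (simp add: lam_def)
  have P0: "P \<noteq> 0" using degree_BOpoly[of lam] NN unfolding P_def by auto
  have roots: "cmod r < 1" if "poly P r = 0" for r
    using roots_inside[OF lam1] that by (simp add: P_def)
  have qz: "q * \<zeta> = 1" by (simp add: q_def \<zeta>_def cis_mult)
  have z0: "\<zeta> \<noteq> 0" by (simp add: \<zeta>_def)
  have X_eq: "X = cis (k1 * y - O1 * (t - t0))" by (simp add: X_def Ec_real y_def)
  have Y_eq: "Y = cis (k2 * y - O2 * (t - t0))" by (simp add: Y_def Ec_real y_def)
  have h1: "lam powi \<nu>' * \<zeta> ^ (N - N') = \<zeta> ^ N * X"
    unfolding lam_def \<zeta>_def X_eq cis_power_int Complex.DeMoivre cis_mult
    using NN by (simp add: k1_def O1_def algebra_simps of_nat_diff)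
  have h2: "lam powi (\<nu> - \<nu>') * \<zeta> ^ N' = \<zeta> ^ N * Y"
    unfolding lam_def \<zeta>_def Y_eq cis_power_int Complex.DeMoivre cis_mult
    using NN by (simp add: k2_def O2_def algebra_simps of_nat_diff)
  have h3: "lam powi \<nu> = \<zeta> ^ N * (X * Y)"
    unfolding lam_def \<zeta>_def X_eq Y_eq cis_power_int Complex.DeMoivre cis_mult
    using NN by (simp add: k1_def k2_def O1_def O2_def algebra_simps of_nat_diff)
  have acx: "ac (of_real x) (of_real t) = 1 + of_real A * X + of_real B * Y + of_real C * (X * Y)"
    by (simp add: ac_def Pg_def Ec3 X_def Y_def algebra_simps)
  have Pgx: "Pg 1 0 (of_real x) (of_real t) = of_real k1 * of_real A * X + of_real k2 * of_real B * Y + of_real k3 * of_real C * (X * Y)"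
    by (simp add: Pg_def Ec3 X_def Y_def algebra_simps)
  have polyP: "poly P \<zeta> = \<zeta> ^ N * ac (of_real x) (of_real t)"
  proof -
    have "poly P \<zeta> = \<zeta> ^ N + of_real A * (lam powi \<nu>' * \<zeta> ^ (N - N')) + of_real B * (lam powi (\<nu> - \<nu>') * \<zeta> ^ N')
                 + of_real C * lam powi \<nu>"
      by (simp add: P_def BOpoly_def poly_monom algebra_simps)
    thus ?thesis unfolding h1 h2 h3 acx by (simp add: algebra_simps)
  qed
  have polyD: "\<zeta> * poly (pderiv P) \<zeta> = \<zeta> ^ N * (of_nat N + of_real k2 * of_real A * X + of_real k1 * of_real B * Y)"
  proof -
    have pw: "\<zeta> * \<zeta> ^ (n - 1) = \<zeta> ^ n" if "n > 0" for n
      using that by (cases n) auto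
    have "\<zeta> * poly (pderiv P) \<zeta> = of_nat N * (\<zeta> * \<zeta> ^ (N - 1))
            + of_nat (N - N') * of_real A * (lam powi \<nu>' * (\<zeta> * \<zeta> ^ (N - N' - 1)))
            + of_nat N' * of_real B * (lam powi (\<nu> - \<nu>') * (\<zeta> * \<zeta> ^ (N' - 1)))"
      by (simp add: P_def BOpoly_def pderiv_add pderiv_monom pderiv_pCons poly_monom algebra_simps)
    also have "\<dots> = of_nat N * \<zeta> ^ N + of_nat (N - N') * of_real A * (lam powi \<nu>' * \<zeta> ^ (N - N'))
            + of_nat N' * of_real B * (lam powi (\<nu> - \<nu>') * \<zeta> ^ N')"
    proof -
      have e1: "\<zeta> * \<zeta> ^ (N - Suc 0) = \<zeta> ^ N" using NN by (simp flip: power_Suc)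
      have e2: "\<zeta> * \<zeta> ^ (N - Suc N') = \<zeta> ^ (N - N')"
        using NN by (simp flip: power_Suc add: Suc_diff_Suc)
      have e3: "\<zeta> * \<zeta> ^ (N' - Suc 0) = \<zeta> ^ N'" using NN by (simp flip: power_Suc)
      show ?thesis by (simp add: e1 e2 e3)
    qed
    also have "\<dots> = \<zeta> ^ N * (of_nat N + of_real k2 * of_real A * X + of_real k1 * of_real B * Y)"
      unfolding h1 h2 using NN by (simp add: k1_def k2_def of_nat_diff algebra_simps)
    finally show ?thesis .
  qed
  have acnz: "ac (of_real x) (of_real t) \<noteq> 0" by (rule ac_nonzero_real)
  have Pz: "poly P \<zeta> \<noteq> 0" using polyP z0 acnz by simp
  have fin: "finite {r. poly P r = 0}" using P0 poly_roots_finite by blast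
  have ub: "ubeta r y = 4 * Re (r / (\<zeta> - r)) - 0" if "poly P r = 0" for r
  proof -
    have r1: "cmod r < 1" using roots that by blast
    have "cmod (r * q) < 1" using r1 by (simp add: q_def norm_mult)
    hence nz: "1 - r * q \<noteq> 0" by auto
    have "r * q / (1 - r * q) = r / (\<zeta> - r)"
    proof -
      have e: "\<zeta> - r = \<zeta> * (1 - r * q)" using qz by (simp add: algebra_simps)
      have "r / (\<zeta> - r) = (r * (q * \<zeta>)) / (\<zeta> * (1 - r * q))" unfolding e using qz by simp
      also have "\<dots> = r * q / (1 - r * q)" using z0 by (simp add: mult.assoc mult.commute mult.left_commute)
      finally show ?thesis by simp
    qed
    thus ?thesis using ubeta_closed[OF r1, of y] by (simp add: q_def)
  qed
  have zr: "\<zeta> - r \<noteq> 0" if "poly P r = 0" for r using that Pz by auto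
  have "root_sum P y = (\<Sum>r\<in>{r. poly P r = 0}. real (order r P) * (4 * Re (r / (\<zeta> - r))))"
    unfolding root_sum_def using ub by (intro sum.cong) auto
  also have "\<dots> = 4 * Re (\<Sum>r\<in>{r. poly P r = 0}. of_nat (order r P) * (\<zeta> / (\<zeta> - r) - 1))"
  proof -
    have eq: "r / (\<zeta> - r) = \<zeta> / (\<zeta> - r) - 1" if "poly P r = 0" for r
      using zr[OF that] by (simp add: field_simps)
    have "(\<Sum>r\<in>{r. poly P r = 0}. of_nat (order r P) * (\<zeta> / (\<zeta> - r) - 1))
        = (\<Sum>r\<in>{r. poly P r = 0}. of_nat (order r P) * (r / (\<zeta> - r)))"
      by (intro sum.cong refl) (simp add: eq)
    hence "4 * Re (\<Sum>r\<in>{r. poly P r = 0}. of_nat (order r P) * (\<zeta> / (\<zeta> - r) - 1))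
        = 4 * Re (\<Sum>r\<in>{r. poly P r = 0}. of_nat (order r P) * (r / (\<zeta> - r)))" by simp
    also have "\<dots> = (\<Sum>r\<in>{r. poly P r = 0}. real (order r P) * (4 * Re (r / (\<zeta> - r))))"
    proof -
      have pw: "4 * Re (of_nat k * w) = real k * (4 * Re w)" for k w by simp
      show ?thesis by (simp only: Re_sum sum_distrib_left pw)
    qed
    finally show ?thesis by simp
  qed
  also have "(\<Sum>r\<in>{r. poly P r = 0}. of_nat (order r P) * (\<zeta> / (\<zeta> - r) - 1))
      = \<zeta> * (\<Sum>r\<in>{r. poly P r = 0}. of_nat (order r P) / (\<zeta> - r)) - of_nat (\<Sum>r\<in>{r. poly P r = 0}. order r P)"
    by (simp add: sum_distrib_left sum_subtractf algebra_simps)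
  also have "\<dots> = \<zeta> * poly (pderiv P) \<zeta> / poly P \<zeta> - of_nat N"
    using logderiv_poly[OF Pz, symmetric] sum_order_degree[of P] degree_BOpoly[of lam]
    unfolding P_def by (simp add: times_divide_eq_right)
  also have "\<dots> = - (Pg 1 0 (of_real x) (of_real t) / ac (of_real x) (of_real t))"
  proof -
    define D where "D = of_nat N + of_real k2 * of_real A * X + of_real k1 * of_real B * Y"
    have Nk: "(of_nat N :: complex) = of_real k1 + of_real k2" "(of_real k3 :: complex) = of_real k1 + of_real k2"
      using NN by (simp_all add: k1_def k2_def k3_def of_nat_diff)
    have num: "D - of_nat N * ac (of_real x) (of_real t) = - Pg 1 0 (of_real x) (of_real t)"
      unfolding D_def acx Pgx Nk by (simp add: algebra_simps)
    have "\<zeta> ^ N * D / (\<zeta> ^ N * ac (of_real x) (of_real t)) - of_nat N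
        = (D - of_nat N * ac (of_real x) (of_real t)) / ac (of_real x) (of_real t)"
      using z0 acnz by (simp add: field_simps)
    thus ?thesis unfolding polyD polyP D_def[symmetric] num by simp
  qed
  finally show ?thesis by (simp add: P_def lam_def y_def)
qed

end


context bo begin

definition "gg j l w v = Pg j l w v / ac w v"

lemma Ec_dw: "((\<lambda>w. Ec k om w v) has_field_derivative (\<i> * of_real k * Ec k om w v)) (at w)"
  unfolding Ec_def by (auto intro!: derivative_eq_intros simp: algebra_simps)

lemma Ec_dv: "((\<lambda>v. Ec k om w v) has_field_derivative (- \<i> * of_real om * Ec k om w v)) (at v)"
  unfolding Ec_def by (auto intro!: derivative_eq_intros simp: algebra_simps)

lemma Pg_dw: "((\<lambda>w. Pg j l w v) has_field_derivative (\<i> * Pg (Suc j) l w v)) (at w)"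
  unfolding Pg_def
  by (rule derivative_eq_intros Ec_dw refl)+ (simp add: algebra_simps)

lemma Pg_dv: "((\<lambda>v. Pg j l w v) has_field_derivative (- \<i> * Pg j (Suc l) w v)) (at v)"
  unfolding Pg_def
  by (rule derivative_eq_intros Ec_dv refl)+ (simp add: algebra_simps)

lemma ac_dw: "((\<lambda>w. ac w v) has_field_derivative (\<i> * Pg 1 0 w v)) (at w)"
  unfolding ac_def using Pg_dw[of 0 0] by (auto intro!: derivative_eq_intros)

lemma ac_dv: "((\<lambda>v. ac w v) has_field_derivative (- \<i> * Pg 0 1 w v)) (at v)"
  unfolding ac_def using Pg_dv[of 0 0] by (auto intro!: derivative_eq_intros)

lemma gg_dw:
  assumes "ac w v \<noteq> 0"
  shows "((\<lambda>w. gg j l w v) has_field_derivative (\<i> * (gg (Suc j) l w v - gg j l w v * gg 1 0 w v))) (at w)"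
proof -
  have "((\<lambda>w. Pg j l w v / ac w v) has_field_derivative
      ((\<i> * Pg (Suc j) l w v) * ac w v - Pg j l w v * (\<i> * Pg 1 0 w v)) / (ac w v * ac w v)) (at w)"
    by (rule DERIV_divide[OF Pg_dw ac_dw assms])
  moreover have "((\<i> * Pg (Suc j) l w v) * ac w v - Pg j l w v * (\<i> * Pg 1 0 w v)) / (ac w v * ac w v)
      = \<i> * (gg (Suc j) l w v - gg j l w v * gg 1 0 w v)"
    using assms by (simp add: gg_def field_simps)
  ultimately show ?thesis unfolding gg_def by simp
qed

lemma gg_dv:
  assumes "ac w v \<noteq> 0"
  shows "((\<lambda>v. gg j l w v) has_field_derivative (- \<i> * (gg j (Suc l) w v - gg j l w v * gg 0 1 w v))) (at v)"
proof -
  have "((\<lambda>v. Pg j l w v / ac w v) has_field_derivative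
      ((- \<i> * Pg j (Suc l) w v) * ac w v - Pg j l w v * (- \<i> * Pg 0 1 w v)) / (ac w v * ac w v)) (at v)"
    by (rule DERIV_divide[OF Pg_dv ac_dv assms])
  moreover have "((- \<i> * Pg j (Suc l) w v) * ac w v - Pg j l w v * (- \<i> * Pg 0 1 w v)) / (ac w v * ac w v)
      = - \<i> * (gg j (Suc l) w v - gg j l w v * gg 0 1 w v)"
    using assms by (simp add: gg_def field_simps)
  ultimately show ?thesis unfolding gg_def by simp
qed

abbreviation "gr j l x t \<equiv> gg j l (complex_of_real x) (complex_of_real t)"

definition "Uf x t = \<alpha>0 - 4 * Re (gr 1 0 x t)"
definition "U1f x t = 4 * Im (gr 2 0 x t - (gr 1 0 x t)^2)"
definition "Gf x t = gr 3 0 x t - 3 * gr 1 0 x t * gr 2 0 x t + 2 * (gr 1 0 x t)^3"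
definition "U2f x t = 4 * Re (Gf x t)"
definition "Utf x t = - 4 * Im (gr 1 1 x t - gr 1 0 x t * gr 0 1 x t)"

lemma Uf_dx: "((\<lambda>y. Uf y t) has_real_derivative U1f x t) (at x)"
proof -
  have "((\<lambda>w. gg 1 0 w (of_real t)) has_field_derivative (\<i> * (gr 2 0 x t - gr 1 0 x t * gr 1 0 x t))) (at (of_real x))"
    using gg_dw[OF ac_nonzero_real, of 1 0] by (simp only: Suc_1)
  hence "((\<lambda>y. gr 1 0 y t) has_vector_derivative (\<i> * (gr 2 0 x t - gr 1 0 x t * gr 1 0 x t))) (at x)"
    by (rule has_vector_derivative_real_field)
  hence "((\<lambda>y. Re (gr 1 0 y t)) has_real_derivative Re (\<i> * (gr 2 0 x t - gr 1 0 x t * gr 1 0 x t))) (at x)"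
    by (rule has_field_derivative_Re)
  hence "((\<lambda>y. \<alpha>0 - 4 * Re (gr 1 0 y t)) has_real_derivative (0 - 4 * Re (\<i> * (gr 2 0 x t - gr 1 0 x t * gr 1 0 x t)))) (at x)"
    by (rule DERIV_diff[OF DERIV_const DERIV_cmult])
  thus ?thesis unfolding Uf_def U1f_def by (simp add: power2_eq_square)
qed

lemma U1f_dx: "((\<lambda>y. U1f y t) has_real_derivative U2f x t) (at x)"
proof -
  have a: "ac (of_real x) (of_real t) \<noteq> 0" by (rule ac_nonzero_real)
  have "((\<lambda>w. gg 2 0 w (of_real t) - gg 1 0 w (of_real t) * gg 1 0 w (of_real t)) has_field_derivative
     (\<i> * (gr 3 0 x t - gr 2 0 x t * gr 1 0 x t) - (\<i> * (gr 2 0 x t - gr 1 0 x t * gr 1 0 x t) * gr 1 0 x t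
        + \<i> * (gr 2 0 x t - gr 1 0 x t * gr 1 0 x t) * gr 1 0 x t))) (at (of_real x))"
  proof -
    have e: "Suc 2 = (3::nat)" "Suc 1 = (2::nat)" by simp_all
    show ?thesis
      by (rule DERIV_diff DERIV_mult gg_dw[OF a, of 2 0, unfolded e] gg_dw[OF a, of 1 0, unfolded e])+
  qed
  hence "((\<lambda>y. gr 2 0 y t - gr 1 0 y t * gr 1 0 y t) has_vector_derivative
     (\<i> * (gr 3 0 x t - gr 2 0 x t * gr 1 0 x t) - (\<i> * (gr 2 0 x t - gr 1 0 x t * gr 1 0 x t) * gr 1 0 x t
        + \<i> * (gr 2 0 x t - gr 1 0 x t * gr 1 0 x t) * gr 1 0 x t))) (at x)"
    by (rule has_vector_derivative_real_field)
  hence "((\<lambda>y. Im (gr 2 0 y t - gr 1 0 y t * gr 1 0 y t)) has_real_derivative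
     Im (\<i> * (gr 3 0 x t - gr 2 0 x t * gr 1 0 x t) - (\<i> * (gr 2 0 x t - gr 1 0 x t * gr 1 0 x t) * gr 1 0 x t
        + \<i> * (gr 2 0 x t - gr 1 0 x t * gr 1 0 x t) * gr 1 0 x t))) (at x)"
    by (rule has_field_derivative_Im)
  hence D: "((\<lambda>y. 4 * Im (gr 2 0 y t - gr 1 0 y t * gr 1 0 y t)) has_real_derivative
     4 * Im (\<i> * (gr 3 0 x t - gr 2 0 x t * gr 1 0 x t) - (\<i> * (gr 2 0 x t - gr 1 0 x t * gr 1 0 x t) * gr 1 0 x t
        + \<i> * (gr 2 0 x t - gr 1 0 x t * gr 1 0 x t) * gr 1 0 x t))) (at x)"
    by (rule DERIV_cmult)
  have E: "\<i> * (gr 3 0 x t - gr 2 0 x t * gr 1 0 x t) - (\<i> * (gr 2 0 x t - gr 1 0 x t * gr 1 0 x t) * gr 1 0 x t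
        + \<i> * (gr 2 0 x t - gr 1 0 x t * gr 1 0 x t) * gr 1 0 x t) = \<i> * Gf x t"
    unfolding Gf_def by (simp add: algebra_simps power2_eq_square power3_eq_cube)
  have F: "(\<lambda>y. 4 * Im (gr 2 0 y t - gr 1 0 y t * gr 1 0 y t)) = (\<lambda>y. U1f y t)"
    by (simp add: U1f_def power2_eq_square)
  have G: "4 * Im (\<i> * Gf x t) = U2f x t" by (simp add: U2f_def)
  show ?thesis using D unfolding E F G .
qed

lemma Uf_dt: "((\<lambda>\<tau>. Uf x \<tau>) has_real_derivative Utf x t) (at t)"
proof -
  have "((\<lambda>v. gg 1 0 (of_real x) v) has_field_derivative (- \<i> * (gr 1 1 x t - gr 1 0 x t * gr 0 1 x t))) (at (of_real t))"
    using gg_dv[OF ac_nonzero_real, of 1 0] by (simp only: Suc_1 One_nat_def)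
  hence "((\<lambda>\<tau>. gr 1 0 x \<tau>) has_vector_derivative (- \<i> * (gr 1 1 x t - gr 1 0 x t * gr 0 1 x t))) (at t)"
    by (rule has_vector_derivative_real_field)
  hence "((\<lambda>\<tau>. Re (gr 1 0 x \<tau>)) has_real_derivative Re (- \<i> * (gr 1 1 x t - gr 1 0 x t * gr 0 1 x t))) (at t)"
    by (rule has_field_derivative_Re)
  hence "((\<lambda>\<tau>. \<alpha>0 - 4 * Re (gr 1 0 x \<tau>)) has_real_derivative (0 - 4 * Re (- \<i> * (gr 1 1 x t - gr 1 0 x t * gr 0 1 x t)))) (at t)"
    by (rule DERIV_diff[OF DERIV_const DERIV_cmult])
  thus ?thesis unfolding Uf_def Utf_def by simp
qed

end


lemma poly_S1:
  fixes n n1 v v1 s s' M W A0 K :: real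
  assumes "M = n * v1 - n1 * v" "W = n1 * (n-n1) * (n+2 * s')" "A0 = n^2 * v1 - n1^2 * v - 2 * s * M - 2 * n1 * (v1-v) * s'"
    "K = v * W - A0 * n + n^2 * M"
  shows "(v1 * W - A0 * n1 + n1^2 * M - K) * (n - n1 + s) + s * ((2 * v - v1) * W - A0 * (2 * n-n1) + (2 * n-n1)^2 * M - K) = 0"
  unfolding assms by (simp add: algebra_simps power2_eq_square)

lemma poly_S2:
  fixes n n1 v v1 s s' M W A0 K :: real
  assumes "M = n * v1 - n1 * v" "W = n1 * (n-n1) * (n+2 * s')" "A0 = n^2 * v1 - n1^2 * v - 2 * s * M - 2 * n1 * (v1-v) * s'"
    "K = v * W - A0 * n + n^2 * M"
  shows "((v - v1) * W - A0 * (n-n1) + (n-n1)^2 * M - K) * (n+s+s') + (n - n1 + s + s') * ((v+v1) * W - A0 * (n+n1) + (n+n1)^2 * M - K) = 0"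
  unfolding assms by (simp add: algebra_simps power2_eq_square)

lemma poly_S0:
  fixes n n1 v v1 s s' M W A0 K :: real
  assumes "M = n * v1 - n1 * v" "W = n1 * (n-n1) * (n+2 * s')" "A0 = n^2 * v1 - n1^2 * v - 2 * s * M - 2 * n1 * (v1-v) * s'"
    "K = v * W - A0 * n + n^2 * M"
  shows "- K * (n+s+s') * (n1 * (n-n1) + (n+s') * s') * (n-n1+s)
     + (n-n1+s+s') * ((n+s') * s') * (n-n1+s) * (2 * v1 * W - 2 * A0 * n1 + 4 * n1^2 * M - K)
     + ((n+s') * s') * s * (n+s+s') * (2 * (v-v1) * W - 2 * A0 * (n-n1) + 4 * (n-n1)^2 * M - K)
     + s * (n-n1+s+s') * (n1 * (n-n1) + (n+s') * s') * (2 * v * W - 2 * A0 * n + 4 * n^2 * M - K) = 0"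
  unfolding assms by (simp add: algebra_simps power2_eq_square)

lemma comb2:
  fixes a b d m s :: real
  assumes "m \<noteq> 0" "d \<noteq> 0" "a * d + s * b = 0"
  shows "a / m + s / d * (b / m) = 0"
proof -
  have "a / m + s / d * (b / m) = (a * d + s * b) / (d * m)" using assms by (simp add: field_simps)
  thus ?thesis using assms by simp
qed

lemma comb0:
  fixes K a b c m NP DP NQ DQ NR DR :: real
  assumes "m \<noteq> 0" "DP \<noteq> 0" "DQ \<noteq> 0" "DR \<noteq> 0"
    "- K * DP * DQ * DR + NP * NQ * DR * a + NQ * NR * DP * b + NR * NP * DQ * c = 0"
  shows "- (K / m) + NP / DP * (NQ / DQ) * (a / m) + NQ / DQ * (NR / DR) * (b / m) + NR / DR * (NP / DP) * (c / m) = 0"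
proof -
  have "- (K / m) + NP / DP * (NQ / DQ) * (a / m) + NQ / DQ * (NR / DR) * (b / m) + NR / DR * (NP / DP) * (c / m)
      = (- K * DP * DQ * DR + NP * NQ * DR * a + NQ * NR * DP * b + NR * NP * DQ * c) / (m * DP * DQ * DR)"
    using assms by (simp add: field_simps)
  thus ?thesis using assms by simp
qed

context bo begin

definition "Qf k om = om - \<alpha>0 * k + k^2"
definition "\<kappa> = O3 - \<alpha>0 * k3 + k3^2"

definition "Wp = real N' * (real N - real N') * (real N + 2 * s')"
definition "A0p = real N ^ 2 * of_int \<nu>' - real N' ^ 2 * of_int \<nu> - 2 * s * mm - 2 * real N' * (of_int \<nu>' - of_int \<nu>) * s'"
definition "Kp = of_int \<nu> * Wp - A0p * real N + real N ^ 2 * mm"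

lemma mm_eq: "mm = real N * of_int \<nu>' - real N' * of_int \<nu>" by (simp add: mm_def)
lemma \<omega>_eq: "\<omega> = Wp / mm" by (simp add: \<omega>_def Wp_def)
lemma \<alpha>0_eq: "\<alpha>0 = A0p / mm"
  using mm_pos by (simp add: \<alpha>0_def A0p_def field_simps)

lemma Qf_eq: "Qf k (c * \<omega>) - \<kappa> = (c * Wp - A0p * k + k^2 * mm - Kp) / mm"
  using mm_pos unfolding Qf_def \<kappa>_def \<omega>_eq \<alpha>0_eq Kp_def O3_def k3_def \<omega>_eq
  by (simp add: field_simps)

lemma S1: "(Qf k1 O1 - \<kappa>) + R2 * (Qf (k3 + k2) (O3 + O2) - \<kappa>) = 0"
proof -
  have e1: "O1 = of_int \<nu>' * \<omega>" "O3 + O2 = (2 * of_int \<nu> - of_int \<nu>') * \<omega>"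
    by (simp_all add: O1_def O2_def O3_def algebra_simps)
  have e2: "k3 + k2 = 2 * real N - real N'" using NN by (simp add: k2_def k3_def)
  have p: "(of_int \<nu>' * Wp - A0p * real N' + (real N')^2 * mm - Kp) * (real N - real N' + s)
     + s * ((2 * of_int \<nu> - of_int \<nu>') * Wp - A0p * (2 * real N - real N') + (2 * real N - real N')^2 * mm - Kp) = 0"
    by (rule poly_S1[OF mm_eq Wp_def A0p_def Kp_def])
  have d: "real N - real N' + s > 0" using NN ss by simp
  show ?thesis unfolding e1 e2 Qf_eq R2_def k1_def
    by (rule comb2[OF _ _ p]) (use d mm_pos in auto)
qed

lemma S2: "(Qf k2 O2 - \<kappa>) + P2 * (Qf (k3 + k1) (O3 + O1) - \<kappa>) = 0"
proof -
  have e1: "O2 = (of_int \<nu> - of_int \<nu>') * \<omega>" "O3 + O1 = (of_int \<nu> + of_int \<nu>') * \<omega>"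
    by (simp_all add: O1_def O2_def O3_def algebra_simps)
  have e2: "k3 + k1 = real N + real N'" "k2 = real N - real N'" using NN by (simp_all add: k1_def k2_def k3_def)
  have p: "((of_int \<nu> - of_int \<nu>') * Wp - A0p * (real N - real N') + (real N - real N')^2 * mm - Kp) * (real N + s + s')
     + (real N - real N' + s + s') * ((of_int \<nu> + of_int \<nu>') * Wp - A0p * (real N + real N') + (real N + real N')^2 * mm - Kp) = 0"
    by (rule poly_S2[OF mm_eq Wp_def A0p_def Kp_def])
  have d: "real N + s + s' > 0" using NN ss by simp
  show ?thesis unfolding e1 e2 Qf_eq P2_def
    by (rule comb2[OF _ _ p]) (use d mm_pos in auto)
qed

lemma \<kappa>_eq: "\<kappa> = Kp / mm"
  unfolding \<kappa>_def O3_def k3_def \<omega>_eq \<alpha>0_eq Kp_def using mm_pos by (simp add: field_simps)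

lemma S0: "- \<kappa> + P2 * Q2 * (Qf (2 * k1) (2 * O1) - \<kappa>) + Q2 * R2 * (Qf (2 * k2) (2 * O2) - \<kappa>)
    + R2 * P2 * (Qf (2 * k3) (2 * O3) - \<kappa>) = 0"
proof -
  have e1: "2 * O1 = (2 * of_int \<nu>') * \<omega>" "2 * O2 = (2 * (of_int \<nu> - of_int \<nu>')) * \<omega>"
     "2 * O3 = (2 * of_int \<nu>) * \<omega>"
    by (simp_all add: O1_def O2_def O3_def algebra_simps)
  have e2: "2 * k1 = 2 * real N'" "2 * k2 = 2 * (real N - real N')" "2 * k3 = 2 * real N"
    using NN by (simp_all add: k1_def k2_def k3_def)
  have p: "- Kp * (real N + s + s') * (real N' * (real N - real N') + (real N + s') * s') * (real N - real N' + s)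
     + (real N - real N' + s + s') * ((real N + s') * s') * (real N - real N' + s) * (2 * of_int \<nu>' * Wp - 2 * A0p * real N' + 4 * (real N')^2 * mm - Kp)
     + ((real N + s') * s') * s * (real N + s + s') * (2 * (of_int \<nu> - of_int \<nu>') * Wp - 2 * A0p * (real N - real N') + 4 * (real N - real N')^2 * mm - Kp)
     + s * (real N - real N' + s + s') * (real N' * (real N - real N') + (real N + s') * s') * (2 * of_int \<nu> * Wp - 2 * A0p * real N + 4 * (real N)^2 * mm - Kp) = 0"
    by (rule poly_S0[OF mm_eq Wp_def A0p_def Kp_def])
  have sq: "(2 * x)^2 = 4 * x^2" for x :: real by (simp add: power2_eq_square)
  have p': "- Kp * (real N + s + s') * (real N' * (real N - real N') + (real N + s') * s') * (real N - real N' + s)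
     + (real N - real N' + s + s') * ((real N + s') * s') * (real N - real N' + s) * ((2 * of_int \<nu>') * Wp - A0p * (2 * real N') + (2 * real N')^2 * mm - Kp)
     + ((real N + s') * s') * s * (real N + s + s') * ((2 * (of_int \<nu> - of_int \<nu>')) * Wp - A0p * (2 * (real N - real N')) + (2 * (real N - real N'))^2 * mm - Kp)
     + s * (real N - real N' + s + s') * (real N' * (real N - real N') + (real N + s') * s') * ((2 * of_int \<nu>) * Wp - A0p * (2 * real N) + (2 * real N)^2 * mm - Kp) = 0"
    using p unfolding sq by (simp add: algebra_simps)
  have d1: "real N + s + s' > 0" using NN ss by simp
  have d2: "real N' * (real N - real N') + (real N + s') * s' > 0"
    using NN ss by (simp add: add_pos_nonneg)
  have d3: "real N - real N' + s > 0" using NN ss by simp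
  show ?thesis unfolding e1 e2 Qf_eq unfolding P2_def Q2_def R2_def \<kappa>_eq
    by (rule comb0[OF _ _ _ _ p']) (use d1 d2 d3 mm_pos in auto)
qed

end


lemma bil0_g:
  fixes k1 k2 k3 O1 O2 O3 a0 \<kappa> A B C X Y :: complex
  assumes X: "X \<noteq> 0" and Y: "Y \<noteq> 0" and k3: "k3 = k1 + k2" and O3: "O3 = O1 + O2"
    and \<kappa>: "\<kappa> = O3 - a0 * k3 + k3^2"
    and a: "1 + A * X + B * Y + C * X * Y \<noteq> 0" and sg: "1 + A / X + B / Y + C / (X * Y) \<noteq> 0"
    and h0: "- \<kappa> + A^2 * (2 * O1 - a0 * (2 * k1) + (2 * k1)^2 - \<kappa>) + B^2 * (2 * O2 - a0 * (2 * k2) + (2 * k2)^2 - \<kappa>)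
              + C^2 * (2 * O3 - a0 * (2 * k3) + (2 * k3)^2 - \<kappa>) = 0"
    and hX: "A * (O1 - a0 * k1 + k1^2 - \<kappa>) + B * C * ((O3 + O2) - a0 * (k3 + k2) + (k3 + k2)^2 - \<kappa>) = 0"
    and hY: "B * (O2 - a0 * k2 + k2^2 - \<kappa>) + A * C * ((O3 + O1) - a0 * (k3 + k1) + (k3 + k1)^2 - \<kappa>) = 0"
  defines "aa \<equiv> 1 + A * X + B * Y + C * X * Y" and "Sg \<equiv> 1 + A / X + B / Y + C / (X * Y)"
  defines "Pk \<equiv> \<lambda>j::nat. k1^j * A * X + k2^j * B * Y + k3^j * C * X * Y"
  defines "Pk' \<equiv> \<lambda>j::nat. k1^j * A / X + k2^j * B / Y + k3^j * C / (X * Y)"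
  defines "PO \<equiv> O1 * A * X + O2 * B * Y + O3 * C * X * Y" and "PO' \<equiv> O1 * A / X + O2 * B / Y + O3 * C / (X * Y)"
  shows "PO / aa + PO' / Sg - a0 * (Pk 1 / aa + Pk' 1 / Sg) + Pk 2 / aa + Pk' 2 / Sg + 2 * (Pk 1 / aa) * (Pk' 1 / Sg) = \<kappa>"
proof -
  have E: "PO * Sg + aa * PO' - a0 * (Pk 1 * Sg + aa * Pk' 1) + Pk 2 * Sg + 2 * Pk 1 * Pk' 1 + aa * Pk' 2 - \<kappa> * aa * Sg = 0"
    using bil0_alg[where ?k1.0=k1 and ?k2.0=k2 and ?O1.0=O1 and ?O2.0=O2 and ?a0.0=a0 and A=A and B=B and C=C and X=X and Y=Y, OF X Y]
      h0 hX hY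
    unfolding aa_def Sg_def Pk_def Pk'_def PO_def PO'_def k3 O3 \<kappa> by simp
  have a': "aa \<noteq> 0" "Sg \<noteq> 0" using a sg by (simp_all add: aa_def Sg_def)
  have "PO / aa + PO' / Sg - a0 * (Pk 1 / aa + Pk' 1 / Sg) + Pk 2 / aa + Pk' 2 / Sg + 2 * (Pk 1 / aa) * (Pk' 1 / Sg) - \<kappa>
     = (PO * Sg + aa * PO' - a0 * (Pk 1 * Sg + aa * Pk' 1) + Pk 2 * Sg + 2 * Pk 1 * Pk' 1 + aa * Pk' 2 - \<kappa> * aa * Sg) / (aa * Sg)"
    using a' by (simp add: field_simps)
  thus ?thesis using E by simp
qed

lemma bil1_g:
  fixes k1 k2 k3 O1 O2 O3 a0 \<kappa> A B C X Y :: complex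
  assumes X: "X \<noteq> 0" and Y: "Y \<noteq> 0" and k3: "k3 = k1 + k2" and O3: "O3 = O1 + O2"
    and \<kappa>: "\<kappa> = O3 - a0 * k3 + k3^2"
    and a: "1 + A * X + B * Y + C * X * Y \<noteq> 0" and sg: "1 + A / X + B / Y + C / (X * Y) \<noteq> 0"
    and hX: "A * (O1 - a0 * k1 + k1^2 - \<kappa>) + B * C * ((O3 + O2) - a0 * (k3 + k2) + (k3 + k2)^2 - \<kappa>) = 0"
    and hY: "B * (O2 - a0 * k2 + k2^2 - \<kappa>) + A * C * ((O3 + O1) - a0 * (k3 + k1) + (k3 + k1)^2 - \<kappa>) = 0"
  defines "aa \<equiv> 1 + A * X + B * Y + C * X * Y" and "Sg \<equiv> 1 + A / X + B / Y + C / (X * Y)"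
  defines "Pk \<equiv> \<lambda>j::nat. k1^j * A * X + k2^j * B * Y + k3^j * C * X * Y"
  defines "Pk' \<equiv> \<lambda>j::nat. k1^j * A / X + k2^j * B / Y + k3^j * C / (X * Y)"
  defines "PO \<equiv> O1 * A * X + O2 * B * Y + O3 * C * X * Y" and "PO' \<equiv> O1 * A / X + O2 * B / Y + O3 * C / (X * Y)"
  defines "PkO \<equiv> k1 * O1 * A * X + k2 * O2 * B * Y + k3 * O3 * C * X * Y"
      and "PkO' \<equiv> k1 * O1 * A / X + k2 * O2 * B / Y + k3 * O3 * C / (X * Y)"
  shows "PkO / aa - (PO / aa) * (Pk' 1 / Sg) + (Pk 1 / aa) * (PO' / Sg) - PkO' / Sg - a0 * (Pk 2 / aa)
          + a0 * (Pk' 2 / Sg) + Pk 3 / aa + (Pk 2 / aa) * (Pk' 1 / Sg) - (Pk 1 / aa) * (Pk' 2 / Sg) - Pk' 3 / Sg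
         = \<kappa> * (Pk 1 / aa - Pk' 1 / Sg)"
proof -
  have E: "(PkO * Sg - PO * Pk' 1 + Pk 1 * PO' - aa * PkO' - a0 * Pk 2 * Sg + a0 * aa * Pk' 2 + Pk 3 * Sg
           + Pk 2 * Pk' 1 - Pk 1 * Pk' 2 - aa * Pk' 3) - \<kappa> * (Pk 1 * Sg - aa * Pk' 1) = 0"
    using bil1_alg[where ?k1.0=k1 and ?k2.0=k2 and ?O1.0=O1 and ?O2.0=O2 and ?a0.0=a0 and A=A and B=B and C=C and X=X and Y=Y, OF X Y]
      hX hY
    unfolding aa_def Sg_def Pk_def Pk'_def PO_def PO'_def PkO_def PkO'_def k3 O3 \<kappa> by simp
  have a': "aa \<noteq> 0" "Sg \<noteq> 0" using a sg by (simp_all add: aa_def Sg_def)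
  have "PkO / aa - (PO / aa) * (Pk' 1 / Sg) + (Pk 1 / aa) * (PO' / Sg) - PkO' / Sg - a0 * (Pk 2 / aa)
          + a0 * (Pk' 2 / Sg) + Pk 3 / aa + (Pk 2 / aa) * (Pk' 1 / Sg) - (Pk 1 / aa) * (Pk' 2 / Sg) - Pk' 3 / Sg
         - \<kappa> * (Pk 1 / aa - Pk' 1 / Sg)
     = ((PkO * Sg - PO * Pk' 1 + Pk 1 * PO' - aa * PkO' - a0 * Pk 2 * Sg + a0 * aa * Pk' 2 + Pk 3 * Sg
           + Pk 2 * Pk' 1 - Pk 1 * Pk' 2 - aa * Pk' 3) - \<kappa> * (Pk 1 * Sg - aa * Pk' 1)) / (aa * Sg)"
    using a' by (simp add: field_simps)
  thus ?thesis using E by simp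
qed

lemma pde_g:
  fixes g1 g2 g3 h01 h11 G1 G2 G3 H01 H11 a0 :: complex
  shows "2*\<i>*((h11 - g1*h01) - (H11 - G1*H01)) + (a0 - 2*(g1 + G1)) * (-2*\<i>*((g2 - g1^2) - (G2 - G1^2)))
     + 2*\<i>*((g3 - 3*g1*g2 + 2*g1^3) - (G3 - 3*G1*G2 + 2*G1^3))
     = 2*\<i>*((h11 - h01*G1 + g1*H01 - H11 - a0*g2 + a0*G2 + g3 + g2*G1 - g1*G2 - G3)
            - (h01 + H01 - a0*(g1 + G1) + g2 + G2 + 2*g1*G1) * (g1 - G1))"
  by (simp add: algebra_simps power2_eq_square power3_eq_cube)


context bo begin

lemma sq_pp: "pp^2 = P2" using P2_bnd by (simp add: pp_def)
lemma sq_qq: "qq^2 = Q2" using Q2_bnd by (simp add: qq_def)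
lemma sq_rr: "rr^2 = R2" using R2_bnd by (simp add: rr_def)

lemma hX_real: "A * (Qf k1 O1 - \<kappa>) + B * C * (Qf (k3 + k2) (O3 + O2) - \<kappa>) = 0"
proof -
  have "B * C = A * R2" unfolding A_eq B_eq C_eq sq_rr[symmetric] by (simp add: power2_eq_square)
  hence "A * (Qf k1 O1 - \<kappa>) + B * C * (Qf (k3 + k2) (O3 + O2) - \<kappa>)
      = A * ((Qf k1 O1 - \<kappa>) + R2 * (Qf (k3 + k2) (O3 + O2) - \<kappa>))" by (simp add: algebra_simps)
  thus ?thesis using S1 by simp
qed

lemma hY_real: "B * (Qf k2 O2 - \<kappa>) + A * C * (Qf (k3 + k1) (O3 + O1) - \<kappa>) = 0"
proof -
  have "A * C = B * P2" unfolding A_eq B_eq C_eq sq_pp[symmetric] by (simp add: power2_eq_square)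
  hence "B * (Qf k2 O2 - \<kappa>) + A * C * (Qf (k3 + k1) (O3 + O1) - \<kappa>)
      = B * ((Qf k2 O2 - \<kappa>) + P2 * (Qf (k3 + k1) (O3 + O1) - \<kappa>))" by (simp add: algebra_simps)
  thus ?thesis using S2 by simp
qed

lemma h0_real: "- \<kappa> + A^2 * (Qf (2 * k1) (2 * O1) - \<kappa>) + B^2 * (Qf (2 * k2) (2 * O2) - \<kappa>)
    + C^2 * (Qf (2 * k3) (2 * O3) - \<kappa>) = 0"
proof -
  have "A^2 = P2 * Q2" "B^2 = Q2 * R2" "C^2 = R2 * P2"
    unfolding A_eq B_eq C_eq sq_pp[symmetric] sq_qq[symmetric] sq_rr[symmetric] by (simp_all add: power_mult_distrib)
  thus ?thesis using S0 by simp
qed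

lemma cX: "cnj (Ec k om (of_real x) (of_real t)) = 1 / Ec k om (of_real x) (of_real t)"
  by (simp add: Ec_real cis_cnj divide_inverse)

lemma Ec_nz: "Ec k om w v \<noteq> 0" by (simp add: Ec_def)

lemma B0_real:
  "gr 0 1 x t + cnj (gr 0 1 x t) - of_real \<alpha>0 * (gr 1 0 x t + cnj (gr 1 0 x t)) + gr 2 0 x t + cnj (gr 2 0 x t)
     + 2 * gr 1 0 x t * cnj (gr 1 0 x t) = of_real \<kappa>"
proof -
  define X where "X = Ec k1 O1 (of_real x) (of_real t)"
  define Y where "Y = Ec k2 O2 (of_real x) (of_real t)"
  have X0: "X \<noteq> 0" and Y0: "Y \<noteq> 0" by (simp_all add: X_def Y_def Ec_nz)
  have cXY: "cnj X = 1 / X" "cnj Y = 1 / Y" by (simp_all add: X_def Y_def cX)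
  let ?A = "complex_of_real A" and ?B = "complex_of_real B" and ?C = "complex_of_real C"
  let ?k1 = "complex_of_real k1" and ?k2 = "complex_of_real k2" and ?k3 = "complex_of_real k3"
  let ?O1 = "complex_of_real O1" and ?O2 = "complex_of_real O2" and ?O3 = "complex_of_real O3"
  have PkR: "Pg j 0 (of_real x) (of_real t) = ?k1^j * ?A * X + ?k2^j * ?B * Y + ?k3^j * ?C * X * Y" for j
    by (simp add: Pg_def Ec3 X_def Y_def)
  have PkC: "cnj (Pg j 0 (of_real x) (of_real t)) = ?k1^j * ?A / X + ?k2^j * ?B / Y + ?k3^j * ?C / (X * Y)" for j
    unfolding PkR by (simp add: cXY)
  have POR: "Pg 0 1 (of_real x) (of_real t) = ?O1 * ?A * X + ?O2 * ?B * Y + ?O3 * ?C * X * Y"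
    by (simp add: Pg_def Ec3 X_def Y_def)
  have POC: "cnj (Pg 0 1 (of_real x) (of_real t)) = ?O1 * ?A / X + ?O2 * ?B / Y + ?O3 * ?C / (X * Y)"
    unfolding POR by (simp add: cXY)
  have acR: "ac (of_real x) (of_real t) = 1 + ?A * X + ?B * Y + ?C * X * Y"
    by (simp add: ac_def Pg_def Ec3 X_def Y_def)
  have acC: "cnj (ac (of_real x) (of_real t)) = 1 + ?A / X + ?B / Y + ?C / (X * Y)"
    unfolding acR by (simp add: cXY)
  have a0: "1 + ?A * X + ?B * Y + ?C * X * Y \<noteq> 0" using ac_nonzero_real acR by metis
  have s0: "1 + ?A / X + ?B / Y + ?C / (X * Y) \<noteq> 0" using a0 acC
    by (metis ac_nonzero_real complex_cnj_zero_iff acR)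
  have hX: "?A * (?O1 - of_real \<alpha>0 * ?k1 + ?k1^2 - of_real \<kappa>) + ?B * ?C * ((?O3 + ?O2) - of_real \<alpha>0 * (?k3 + ?k2) + (?k3 + ?k2)^2 - of_real \<kappa>) = 0"
    using arg_cong[OF hX_real, of complex_of_real] by (simp add: Qf_def)
  have hY: "?B * (?O2 - of_real \<alpha>0 * ?k2 + ?k2^2 - of_real \<kappa>) + ?A * ?C * ((?O3 + ?O1) - of_real \<alpha>0 * (?k3 + ?k1) + (?k3 + ?k1)^2 - of_real \<kappa>) = 0"
    using arg_cong[OF hY_real, of complex_of_real] by (simp add: Qf_def)
  have h0: "- of_real \<kappa> + ?A^2 * (2 * ?O1 - of_real \<alpha>0 * (2 * ?k1) + (2 * ?k1)^2 - of_real \<kappa>) + ?B^2 * (2 * ?O2 - of_real \<alpha>0 * (2 * ?k2) + (2 * ?k2)^2 - of_real \<kappa>)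
              + ?C^2 * (2 * ?O3 - of_real \<alpha>0 * (2 * ?k3) + (2 * ?k3)^2 - of_real \<kappa>) = 0"
    using arg_cong[OF h0_real, of complex_of_real] by (simp add: Qf_def)
  have k3c: "?k3 = ?k1 + ?k2" by (simp add: k3_eq)
  have O3c: "?O3 = ?O1 + ?O2" by (simp add: O3_eq)
  have \<kappa>c: "complex_of_real \<kappa> = ?O3 - of_real \<alpha>0 * ?k3 + ?k3^2" by (simp add: \<kappa>_def)
  note inst = bil0_g[OF X0 Y0 k3c O3c \<kappa>c a0 s0 h0 hX hY]
  show ?thesis
    unfolding gg_def complex_cnj_divide PkC POC acC
    unfolding PkR POR acR by (rule inst)
qed

lemma B1_real:
  "gr 1 1 x t - gr 0 1 x t * cnj (gr 1 0 x t) + gr 1 0 x t * cnj (gr 0 1 x t) - cnj (gr 1 1 x t)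
     - of_real \<alpha>0 * gr 2 0 x t + of_real \<alpha>0 * cnj (gr 2 0 x t) + gr 3 0 x t + gr 2 0 x t * cnj (gr 1 0 x t)
     - gr 1 0 x t * cnj (gr 2 0 x t) - cnj (gr 3 0 x t) = of_real \<kappa> * (gr 1 0 x t - cnj (gr 1 0 x t))"
proof -
  define X where "X = Ec k1 O1 (of_real x) (of_real t)"
  define Y where "Y = Ec k2 O2 (of_real x) (of_real t)"
  have X0: "X \<noteq> 0" and Y0: "Y \<noteq> 0" by (simp_all add: X_def Y_def Ec_nz)
  have cXY: "cnj X = 1 / X" "cnj Y = 1 / Y" by (simp_all add: X_def Y_def cX)
  let ?A = "complex_of_real A" and ?B = "complex_of_real B" and ?C = "complex_of_real C"
  let ?k1 = "complex_of_real k1" and ?k2 = "complex_of_real k2" and ?k3 = "complex_of_real k3"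
  let ?O1 = "complex_of_real O1" and ?O2 = "complex_of_real O2" and ?O3 = "complex_of_real O3"
  have PkR: "Pg j 0 (of_real x) (of_real t) = ?k1^j * ?A * X + ?k2^j * ?B * Y + ?k3^j * ?C * X * Y" for j
    by (simp add: Pg_def Ec3 X_def Y_def)
  have PkC: "cnj (Pg j 0 (of_real x) (of_real t)) = ?k1^j * ?A / X + ?k2^j * ?B / Y + ?k3^j * ?C / (X * Y)" for j
    unfolding PkR by (simp add: cXY)
  have POR: "Pg 0 1 (of_real x) (of_real t) = ?O1 * ?A * X + ?O2 * ?B * Y + ?O3 * ?C * X * Y"
    by (simp add: Pg_def Ec3 X_def Y_def)
  have POC: "cnj (Pg 0 1 (of_real x) (of_real t)) = ?O1 * ?A / X + ?O2 * ?B / Y + ?O3 * ?C / (X * Y)"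
    unfolding POR by (simp add: cXY)
  have PkOR: "Pg 1 1 (of_real x) (of_real t) = ?k1 * ?O1 * ?A * X + ?k2 * ?O2 * ?B * Y + ?k3 * ?O3 * ?C * X * Y"
    by (simp add: Pg_def Ec3 X_def Y_def)
  have PkOC: "cnj (Pg 1 1 (of_real x) (of_real t)) = ?k1 * ?O1 * ?A / X + ?k2 * ?O2 * ?B / Y + ?k3 * ?O3 * ?C / (X * Y)"
    unfolding PkOR by (simp add: cXY)
  have acR: "ac (of_real x) (of_real t) = 1 + ?A * X + ?B * Y + ?C * X * Y"
    by (simp add: ac_def Pg_def Ec3 X_def Y_def)
  have acC: "cnj (ac (of_real x) (of_real t)) = 1 + ?A / X + ?B / Y + ?C / (X * Y)"
    unfolding acR by (simp add: cXY)
  have a0: "1 + ?A * X + ?B * Y + ?C * X * Y \<noteq> 0" using ac_nonzero_real acR by metis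
  have s0: "1 + ?A / X + ?B / Y + ?C / (X * Y) \<noteq> 0" using a0 acC
    by (metis ac_nonzero_real complex_cnj_zero_iff acR)
  have hX: "?A * (?O1 - of_real \<alpha>0 * ?k1 + ?k1^2 - of_real \<kappa>) + ?B * ?C * ((?O3 + ?O2) - of_real \<alpha>0 * (?k3 + ?k2) + (?k3 + ?k2)^2 - of_real \<kappa>) = 0"
    using arg_cong[OF hX_real, of complex_of_real] by (simp add: Qf_def)
  have hY: "?B * (?O2 - of_real \<alpha>0 * ?k2 + ?k2^2 - of_real \<kappa>) + ?A * ?C * ((?O3 + ?O1) - of_real \<alpha>0 * (?k3 + ?k1) + (?k3 + ?k1)^2 - of_real \<kappa>) = 0"
    using arg_cong[OF hY_real, of complex_of_real] by (simp add: Qf_def)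
  have h0: "- of_real \<kappa> + ?A^2 * (2 * ?O1 - of_real \<alpha>0 * (2 * ?k1) + (2 * ?k1)^2 - of_real \<kappa>) + ?B^2 * (2 * ?O2 - of_real \<alpha>0 * (2 * ?k2) + (2 * ?k2)^2 - of_real \<kappa>)
              + ?C^2 * (2 * ?O3 - of_real \<alpha>0 * (2 * ?k3) + (2 * ?k3)^2 - of_real \<kappa>) = 0"
    using arg_cong[OF h0_real, of complex_of_real] by (simp add: Qf_def)
  have k3c: "?k3 = ?k1 + ?k2" by (simp add: k3_eq)
  have O3c: "?O3 = ?O1 + ?O2" by (simp add: O3_eq)
  have \<kappa>c: "complex_of_real \<kappa> = ?O3 - of_real \<alpha>0 * ?k3 + ?k3^2" by (simp add: \<kappa>_def)
  note inst = bil1_g[OF X0 Y0 k3c O3c \<kappa>c a0 s0 hX hY]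
  show ?thesis
    unfolding gg_def complex_cnj_divide PkC POC PkOC acC
    unfolding PkR POR PkOR acR by (rule inst)
qed

lemma ofreal_Im: "complex_of_real (Im z) = - \<i> / 2 * (z - cnj z)"
  by (simp add: complex_diff_cnj algebra_simps)
lemma ofreal_Re: "complex_of_real (Re z) = (z + cnj z) / 2"
  by (simp add: complex_add_cnj)

lemma PDE_real: "Utf x t + Uf x t * U1f x t = 4 * Im (Gf x t)"
proof -
  let ?g1 = "gr 1 0 x t" and ?g2 = "gr 2 0 x t" and ?g3 = "gr 3 0 x t" and ?h01 = "gr 0 1 x t" and ?h11 = "gr 1 1 x t"
  have E: "2*\<i>*((?h11 - ?g1*?h01) - (cnj ?h11 - cnj ?g1*cnj ?h01)) + (of_real \<alpha>0 - 2*(?g1 + cnj ?g1)) * (-2*\<i>*((?g2 - ?g1^2) - (cnj ?g2 - (cnj ?g1)^2)))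
     + 2*\<i>*((?g3 - 3*?g1*?g2 + 2*?g1^3) - (cnj ?g3 - 3*cnj ?g1*cnj ?g2 + 2*(cnj ?g1)^3)) = 0"
    unfolding pde_g B1_real B0_real by (simp add: algebra_simps)
  have "complex_of_real (Utf x t + Uf x t * U1f x t - 4 * Im (Gf x t))
      = 2*\<i>*((?h11 - ?g1*?h01) - (cnj ?h11 - cnj ?g1*cnj ?h01)) + (of_real \<alpha>0 - 2*(?g1 + cnj ?g1)) * (-2*\<i>*((?g2 - ?g1^2) - (cnj ?g2 - (cnj ?g1)^2)))
     + 2*\<i>*((?g3 - 3*?g1*?g2 + 2*?g1^3) - (cnj ?g3 - 3*cnj ?g1*cnj ?g2 + 2*(cnj ?g1)^3))"
    unfolding Utf_def Uf_def U1f_def Gf_def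
    by (simp add: ofreal_Im ofreal_Re field_simps power2_eq_square power3_eq_cube)
  with E have "complex_of_real (Utf x t + Uf x t * U1f x t - 4 * Im (Gf x t)) = 0" by simp
  hence "Utf x t + Uf x t * U1f x t - 4 * Im (Gf x t) = 0" by (simp only: of_real_eq_0_iff)
  thus ?thesis by simp
qed

end


context bo begin

definition "\<rho>0 = root N (2 / (1 + max pp rr))"

lemma \<rho>0_props: "1 < \<rho>0" "pp * \<rho>0 ^ N < 1" "rr * \<rho>0 ^ N < 1"
proof -
  have N0: "0 < N" using NN by simp
  define \<mu> where "\<mu> = max pp rr"
  have \<mu>: "0 \<le> \<mu>" "\<mu> < 1" using pqr_bnd by (auto simp: \<mu>_def)
  have pw: "\<rho>0 ^ N = 2 / (1 + \<mu>)" unfolding \<rho>0_def \<mu>_def[symmetric] using N0 \<mu> by simp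
  show "1 < \<rho>0" unfolding \<rho>0_def \<mu>_def[symmetric] using N0 \<mu> by simp
  have "pp * (2 / (1 + \<mu>)) < 1" using \<mu> pqr_bnd by (simp add: \<mu>_def field_simps)
  thus "pp * \<rho>0 ^ N < 1" using pw by simp
  have "rr * (2 / (1 + \<mu>)) < 1" using \<mu> pqr_bnd by (simp add: \<mu>_def field_simps)
  thus "rr * \<rho>0 ^ N < 1" using pw by simp
qed

lemma tau_nonzero_ball:
  fixes e1 e2 z :: complex
  assumes e: "cmod e1 = 1" "cmod e2 = 1" and z: "cmod z < \<rho>0"
  shows "1 + of_real A * (e1 * z ^ N') + of_real B * (e2 * z ^ (N - N')) + of_real C * (e1 * z ^ N') * (e2 * z ^ (N - N')) \<noteq> 0"
proof -
  define c where "c = max 1 (cmod z)"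
  have c1: "1 \<le> c" and c0: "c > 0" by (auto simp: c_def)
  have zc: "cmod z \<le> c" by (simp add: c_def)
  have cr: "c < \<rho>0" using \<rho>0_props z by (simp add: c_def)
  have cN: "c ^ N' \<le> c ^ N" "c ^ (N - N') \<le> c ^ N" using c1 NN by (auto intro: power_increasing)
  have cNr: "c ^ N \<le> \<rho>0 ^ N" using cr c0 by (simp add: power_mono)
  define p' where "p' = pp * c ^ N'"
  define r' where "r' = rr * c ^ (N - N')"
  have p': "0 \<le> p'" "p' < 1"
  proof -
    show "0 \<le> p'" using pqr_bnd c0 by (simp add: p'_def)
    have "p' \<le> pp * \<rho>0 ^ N" unfolding p'_def using pqr_bnd cN cNr by (intro mult_left_mono) auto
    thus "p' < 1" using \<rho>0_props by simp
  qed
  have r': "0 \<le> r'" "r' < 1"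
  proof -
    show "0 \<le> r'" using pqr_bnd c0 by (simp add: r'_def)
    have "r' \<le> rr * \<rho>0 ^ N" unfolding r'_def using pqr_bnd cN cNr by (intro mult_left_mono) auto
    thus "r' < 1" using \<rho>0_props by simp
  qed
  define X where "X = e1 * (z / of_real c) ^ N'"
  define Y where "Y = e2 * (z / of_real c) ^ (N - N')"
  have nX: "cmod X \<le> 1" unfolding X_def using e zc c0
    by (simp add: norm_mult norm_power norm_divide power_le_one)
  have nY: "cmod Y \<le> 1" unfolding Y_def using e zc c0
    by (simp add: norm_mult norm_power norm_divide power_le_one)
  have "1 + of_real (p' * qq) * X + of_real (qq * r') * Y + of_real (r' * p') * X * Y \<noteq> 0"
    by (rule key_nonzero[OF p' pqr_bnd(3,4) r' nX nY])
  moreover have "of_real (p' * qq) * X = of_real A * (e1 * z ^ N')"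
    using c0 by (simp add: p'_def X_def A_eq power_divide field_simps)
  moreover have "of_real (qq * r') * Y = of_real B * (e2 * z ^ (N - N'))"
    using c0 by (simp add: r'_def Y_def B_eq power_divide field_simps)
  moreover have "of_real (r' * p') * X * Y = of_real C * (e1 * z ^ N') * (e2 * z ^ (N - N'))"
    using c0 by (simp add: r'_def p'_def X_def Y_def C_eq power_divide field_simps)
  ultimately show ?thesis by simp
qed

end


context bo begin

definition "e1 t = cis (- (O1 * (t - t0)))"
definition "e2 t = cis (- (O2 * (t - t0)))"

definition Pz :: "nat \<Rightarrow> nat \<Rightarrow> real \<Rightarrow> complex \<Rightarrow> complex" where
  "Pz j l t z = of_real (k1^j * O1^l * A) * (e1 t * z ^ N') + of_real (k2^j * O2^l * B) * (e2 t * z ^ (N - N'))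
     + of_real (k3^j * O3^l * C) * ((e1 t * z ^ N') * (e2 t * z ^ (N - N')))"
definition "acz t z = 1 + Pz 0 0 t z"
definition "ggz j l t z = Pz j l t z / acz t z"
definition "Gz t z = ggz 3 0 t z - 3 * ggz 1 0 t z * ggz 2 0 t z + 2 * (ggz 1 0 t z)^3"

lemma Ec1_z: "Ec k1 O1 (of_real x) (of_real t) = e1 t * cis (x - x0) ^ N'"
  unfolding Ec_real e1_def Complex.DeMoivre cis_mult by (simp add: k1_def algebra_simps)
lemma Ec2_z: "Ec k2 O2 (of_real x) (of_real t) = e2 t * cis (x - x0) ^ (N - N')"
  unfolding Ec_real e2_def Complex.DeMoivre cis_mult using NN by (simp add: k2_def algebra_simps of_nat_diff)

lemma Pg_z: "Pg j l (of_real x) (of_real t) = Pz j l t (cis (x - x0))"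
  unfolding Pg_def Pz_def Ec3 Ec1_z Ec2_z ..

lemma Gf_z: "Gf x t = Gz t (cis (x - x0))"
  unfolding Gf_def Gz_def gg_def ggz_def ac_def acz_def Pg_z ..

lemma acz_nz: "cmod z < \<rho>0 \<Longrightarrow> acz t z \<noteq> 0"
  unfolding acz_def Pz_def using tau_nonzero_ball[of "e1 t" "e2 t" z]
  by (simp add: e1_def e2_def algebra_simps)

lemma Gz_holo: "Gz t holomorphic_on ball 0 \<rho>0"
  unfolding Gz_def ggz_def Pz_def[abs_def] using acz_nz
  by (intro holomorphic_intros; auto intro!: holomorphic_intros simp: acz_def Pz_def)

lemma Gz0: "Gz t 0 = 0"
proof -
  have z: "(0::complex) ^ N' = 0" "(0::complex) ^ (N - N') = 0" using NN by simp_all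
  show ?thesis unfolding Gz_def ggz_def Pz_def acz_def z by simp
qed

lemma hilbert_t:
  "hilbert_transform_of (\<lambda>x. U2f x t) (\<lambda>x. Utf x t + Uf x t * U1f x t)"
proof -
  have h: "(\<lambda>z. - \<i> * Gz t z) holomorphic_on ball 0 \<rho>0"
    by (intro holomorphic_intros Gz_holo)
  have w0: "(\<lambda>z. - \<i> * Gz t z) 0 = 0" by (simp add: Gz0)
  note H = hilbert_from_holo[OF h \<rho>0_props(1) w0, of x0]
  have f1: "(\<lambda>x. - 4 * Im (- \<i> * Gz t (cis (x - x0)))) = (\<lambda>x. U2f x t)"
    by (rule ext) (simp add: U2f_def Gf_z)
  have f2: "(\<lambda>x. 4 * Re (- \<i> * Gz t (cis (x - x0)))) = (\<lambda>x. Utf x t + Uf x t * U1f x t)"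
    by (rule ext) (simp add: PDE_real Gf_z)
  show ?thesis using H unfolding f1 f2 .
qed

end


lemma ubeta0 [simp]: "ubeta 0 y = 0" by (simp add: ubeta_def)

lemma ubeta_per: "ubeta r (y + 2 * pi) = ubeta r y"
proof -
  have "cos (y + 2 * pi - a) = cos (y - a)" for a
    using cos_periodic[of "y - a"] by (simp add: algebra_simps)
  thus ?thesis by (simp add: ubeta_def Let_def)
qed

lemma root_sum_per: "root_sum p (y + 2 * pi) = root_sum p y"
  by (simp add: root_sum_def ubeta_per)

lemma order1_of_pderiv:
  fixes p :: "complex poly"
  assumes "p \<noteq> 0" "poly p r = 0" "poly (pderiv p) r \<noteq> 0"
  shows "order r p = 1"
  using order_pderiv[OF assms(1,2)] order_0I[OF assms(3)] by simp

lemma root_sum_nz: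
  fixes p :: "complex poly" and b :: complex
  assumes p0: "p \<noteq> 0" and n: "n > 0" and b: "b \<noteq> 0"
    and roots: "\<And>r. r \<noteq> 0 \<Longrightarrow> poly p r = 0 \<longleftrightarrow> r ^ n = b"
    and ord: "\<And>r. r \<noteq> 0 \<Longrightarrow> poly p r = 0 \<Longrightarrow> order r p = 1"
  shows "root_sum p y = (\<Sum>r\<in>{r. r ^ n = b}. ubeta r y)"
proof -
  have fin: "finite {r. poly p r = 0}" using p0 poly_roots_finite by blast
  have "root_sum p y = (\<Sum>r\<in>{r. poly p r = 0} - {0}. real (order r p) * ubeta r y)"
    unfolding root_sum_def by (rule sum.mono_neutral_right[OF fin]) auto
  also have "{r. poly p r = 0} - {0} = {r. r ^ n = b}"
    using roots b n by auto
  also have "(\<Sum>r\<in>{r. r ^ n = b}. real (order r p) * ubeta r y) = (\<Sum>r\<in>{r. r ^ n = b}. ubeta r y)"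
  proof (rule sum.cong[OF refl])
    fix r assume "r \<in> {r. r ^ n = b}"
    hence "r \<noteq> 0" "poly p r = 0" using roots b n by auto
    thus "real (order r p) * ubeta r y = ubeta r y" using ord by simp
  qed
  finally show ?thesis .
qed

lemma root_sum_zero_only:
  fixes p :: "complex poly"
  assumes "\<And>r. poly p r = 0 \<Longrightarrow> r = 0"
  shows "root_sum p y = 0"
  unfolding root_sum_def
proof (rule sum.neutral, rule ballI)
  fix r assume "r \<in> {r. poly p r = 0}"
  hence "r = 0" using assms by auto
  thus "real (order r p) * ubeta r y = 0" by simp
qed

lemma reindex_tw:
  fixes \<beta> :: complex and f :: "complex \<Rightarrow> real"
  assumes n: "n > 0"
  shows "(\<Sum>w\<in>{w. w ^ n = \<beta>}. f (w * cis \<phi>)) = (\<Sum>r\<in>{r. r ^ n = \<beta> * cis (real n * \<phi>)}. f r)"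
proof -
  have inj: "inj_on (\<lambda>w. w * cis \<phi>) {w. w ^ n = \<beta>}"
  proof (rule inj_onI)
    fix a b assume "a * cis \<phi> = b * cis \<phi>" thus "a = b" by simp
  qed
  have cp: "cis \<phi> ^ n = cis (real n * \<phi>)" by (rule Complex.DeMoivre)
  have img: "(\<lambda>w. w * cis \<phi>) ` {w. w ^ n = \<beta>} = {r. r ^ n = \<beta> * cis (real n * \<phi>)}"
  proof (intro equalityI subsetI)
    fix r assume "r \<in> (\<lambda>w. w * cis \<phi>) ` {w. w ^ n = \<beta>}"
    then obtain w where w: "w ^ n = \<beta>" "r = w * cis \<phi>" by auto
    have "r ^ n = w ^ n * cis \<phi> ^ n" unfolding w(2) by (rule power_mult_distrib)
    thus "r \<in> {r. r ^ n = \<beta> * cis (real n * \<phi>)}" unfolding w(1) cp by simp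
  next
    fix r assume "r \<in> {r. r ^ n = \<beta> * cis (real n * \<phi>)}"
    hence r: "r ^ n = \<beta> * cis (real n * \<phi>)" by simp
    have cm: "cis (- \<phi>) ^ n = cis (- (real n * \<phi>))" using Complex.DeMoivre[of "- \<phi>" n] by simp
    have "(r * cis (- \<phi>)) ^ n = r ^ n * cis (- \<phi>) ^ n" by (rule power_mult_distrib)
    also have "\<dots> = \<beta> * (cis (real n * \<phi>) * cis (- (real n * \<phi>)))" unfolding r cm by (simp only: mult.assoc)
    also have "cis (real n * \<phi>) * cis (- (real n * \<phi>)) = 1" by (simp add: cis_mult)
    finally have "(r * cis (- \<phi>)) ^ n = \<beta>" by simp
    moreover have "r = r * cis (- \<phi>) * cis \<phi>" by (simp add: cis_mult mult.assoc)
    ultimately show "r \<in> (\<lambda>w. w * cis \<phi>) ` {w. w ^ n = \<beta>}" by blast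
  qed
  have "(\<Sum>r\<in>(\<lambda>w. w * cis \<phi>) ` {w. w ^ n = \<beta>}. f r) = (\<Sum>w\<in>{w. w ^ n = \<beta>}. f (w * cis \<phi>))"
    by (rule sum.reindex[OF inj, unfolded o_def])
  thus ?thesis unfolding img by simp
qed


lemma frac_cancel: "a \<noteq> 0 \<Longrightarrow> b \<noteq> 0 \<Longrightarrow> c \<noteq> 0 \<Longrightarrow> a / b * (b * x / (c * a)) = x / (c::real)"
  by (simp add: field_simps)

context bo begin

lemma \<omega>_pos: "\<omega> > 0"
  using NN ss mm_pos unfolding \<omega>_def by (intro divide_pos_pos mult_pos_pos) auto

lemma tw_s'0:
  assumes s'0: "s' = 0"
  shows "is_N_hump_tw N \<nu> (2 * pi / \<omega>) (\<lambda>x t. \<alpha>0 + root_sum (BOpoly N N' \<nu> \<nu>' s s' (cis (- (\<omega> * (t - t0))))) (x - x0))"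
proof -
  have N0: "N > 0" using NN by simp
  have Q0: "Q2 = 0" unfolding Q2_def using s'0 by simp
  have A0: "A = 0" by (simp add: A_eq qq_def Q0)
  have B0: "B = 0" by (simp add: B_eq qq_def Q0)
  have C2: "C^2 = s / (real N + s)"
  proof -
    have "C^2 = R2 * P2" unfolding C_eq sq_pp[symmetric] sq_rr[symmetric] by (simp add: power_mult_distrib)
    also have "\<dots> = s / (real N + s)"
    proof -
      have d: "real N - real N' + s \<noteq> 0" "real N + s \<noteq> 0" using NN ss by auto
      have "R2 * P2 = s / (real N - real N' + s) * ((real N - real N' + s) / (real N + s))"
        unfolding R2_def P2_def unfolding s'0 by simp
      also have "\<dots> = s / (real N + s)" using d by simp
      finally show ?thesis .
    qed
    finally show ?thesis .
  qed
  have Cb: "0 \<le> C" "C < 1"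
  proof -
    show "0 \<le> C" using pqr_bnd by (simp add: C_eq)
    have "C \<le> rr" unfolding C_eq using pqr_bnd by (simp add: mult_left_le)
    thus "C < 1" using pqr_bnd by simp
  qed
  define c where "c = tw_speed \<alpha>0 N (- of_real C)"
  have c_eq: "c = \<omega> * of_int \<nu> / real N"
  proof -
    have "c = \<alpha>0 - real N * (1 - 3 * C^2) / (1 - C^2)" by (simp add: c_def tw_speed_def)
    also have "real N * (1 - 3 * C^2) / (1 - C^2) = real N - 2 * s"
    proof -
      have d: "real N + s \<noteq> 0" using N0 ss by auto
      have "C * C \<le> C" using Cb by (intro mult_left_le_one_le) auto
      hence nz: "1 - C^2 \<noteq> 0" using Cb by (simp add: power2_eq_square)
      have "real N * (1 - 3 * C^2) = (real N - 2 * s) * (1 - C^2)" unfolding C2 using d by (simp add: field_simps)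
      thus ?thesis using nz by (simp add: divide_eq_eq)
    qed
    also have "\<alpha>0 - (real N - 2 * s) = \<omega> * of_int \<nu> / real N"
      unfolding \<alpha>0_def \<omega>_def mm_def unfolding s'0 using N0 mm_pos[unfolded mm_def]
      by (simp add: field_simps) (simp add: algebra_simps power2_eq_square)
    finally show ?thesis .
  qed
  show ?thesis unfolding is_N_hump_tw_def
  proof (intro exI conjI allI)
    show "cmod (- complex_of_real C) < 1" using Cb by simp
    show "tw_speed \<alpha>0 N (- complex_of_real C) * (2 * pi / \<omega>) = 2 * pi * of_int \<nu> / real N"
      using \<omega>_pos unfolding c_def[symmetric] c_eq by (simp add: field_simps)
  next
    fix x t
    define \<tau> where "\<tau> = t - t0"
    define y where "y = x - x0"
    define lam where "lam = cis (- (\<omega> * \<tau>))"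
    define P where "P = BOpoly N N' \<nu> \<nu>' s s' lam"
    have P_eq: "P = monom 1 N + [: complex_of_real C * lam powi \<nu> :]"
      by (simp add: P_def BOpoly_def A0 B0)
    have lp: "lam powi \<nu> = cis (real N * (- (c * \<tau>)))"
      unfolding lam_def cis_power_int c_eq using N0 by (simp add: field_simps)
    have tw: "traveling_wave \<alpha>0 N (- complex_of_real C) y \<tau>
        = \<alpha>0 + (\<Sum>r\<in>{r. r ^ N = - complex_of_real C * cis (real N * (- (c * \<tau>)))}. ubeta r y)"
      unfolding traveling_wave_def c_def[symmetric]
      by (simp only: reindex_tw[OF N0, where f="\<lambda>r. ubeta r y" and \<phi>="- (c * \<tau>)" and \<beta>="- complex_of_real C"])
    have "root_sum P y = (\<Sum>r\<in>{r. r ^ N = - complex_of_real C * cis (real N * (- (c * \<tau>)))}. ubeta r y)"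
    proof (cases "C = 0")
      case True
      have "root_sum P y = 0"
        by (rule root_sum_zero_only) (use N0 in \<open>simp add: P_eq True poly_monom\<close>)
      moreover have "{r. r ^ N = - complex_of_real C * cis (real N * (- (c * \<tau>)))} = {0}"
        using N0 True by auto
      ultimately show ?thesis by simp
    next
      case False
      let ?b = "- complex_of_real C * cis (real N * (- (c * \<tau>)))"
      have b0: "?b \<noteq> 0" using False by simp
      have P0: "P \<noteq> 0"
      proof
        assume "P = 0"
        hence "coeff P N = 0" by simp
        thus False using N0 by (simp add: P_eq coeff_monom coeff_pCons split: nat.splits)
      qed
      show ?thesis
      proof (rule root_sum_nz[OF P0 N0 b0])
        fix r :: complex assume "r \<noteq> 0"
        show "poly P r = 0 \<longleftrightarrow> r ^ N = ?b"
          unfolding P_eq lp by (auto simp: poly_monom algebra_simps eq_neg_iff_add_eq_0)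
      next
        fix r :: complex assume r0: "r \<noteq> 0" and pr: "poly P r = 0"
        have "poly (pderiv P) r = of_nat N * r ^ (N - 1)"
          by (simp add: P_eq pderiv_add pderiv_monom pderiv_pCons poly_monom)
        hence "poly (pderiv P) r \<noteq> 0" using r0 N0 by simp
        thus "order r P = 1" by (rule order1_of_pderiv[OF P0 pr])
      qed
    qed
    thus "\<alpha>0 + root_sum (BOpoly N N' \<nu> \<nu>' s s' (cis (- (\<omega> * (t - t0))))) (x - x0)
        = traveling_wave \<alpha>0 N (- complex_of_real C) (x - x0) (t - t0)"
      using tw unfolding P_def lam_def \<tau>_def y_def by simp
  qed
qed

lemma tw_s0:
  assumes s0: "s = 0"
  shows "is_N_hump_tw N' \<nu>' (2 * pi / \<omega>) (\<lambda>x t. \<alpha>0 + root_sum (BOpoly N N' \<nu> \<nu>' s s' (cis (- (\<omega> * (t - t0))))) (x - x0))"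
proof -
  have N0: "N' > 0" using NN by simp
  have R0: "R2 = 0" unfolding R2_def using s0 by simp
  have C0: "C = 0" by (simp add: C_eq rr_def R0)
  have B0: "B = 0" by (simp add: B_eq rr_def R0)
  have A2: "A^2 = s' / (real N' + s')"
  proof -
    have d: "real N - real N' + s' \<noteq> 0" "real N + s' \<noteq> 0" "real N' + s' \<noteq> 0" using NN ss by auto
    have den: "real N' * (real N - real N') + (real N + s') * s' = (real N' + s') * (real N - real N' + s')"
      by (simp add: algebra_simps)
    have "A^2 = P2 * Q2" unfolding A_eq sq_pp[symmetric] sq_qq[symmetric] by (simp add: power_mult_distrib)
    also have "\<dots> = (real N - real N' + s') / (real N + s') * ((real N + s') * s' / ((real N' + s') * (real N - real N' + s')))"
      unfolding P2_def Q2_def den unfolding s0 by simp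
    also have "\<dots> = s' / (real N' + s')" by (rule frac_cancel) (use d in auto)
    finally show ?thesis .
  qed
  have Ab: "0 \<le> A" "A < 1"
  proof -
    show "0 \<le> A" using pqr_bnd by (simp add: A_eq)
    have "A \<le> pp" unfolding A_eq using pqr_bnd by (simp add: mult_left_le)
    thus "A < 1" using pqr_bnd by simp
  qed
  define c where "c = tw_speed \<alpha>0 N' (- of_real A)"
  have c_eq: "c = \<omega> * of_int \<nu>' / real N'"
  proof -
    have "c = \<alpha>0 - real N' * (1 - 3 * A^2) / (1 - A^2)" by (simp add: c_def tw_speed_def)
    also have "real N' * (1 - 3 * A^2) / (1 - A^2) = real N' - 2 * s'"
    proof -
      have d: "real N' + s' \<noteq> 0" using N0 ss by auto
      have "A * A \<le> A" using Ab by (intro mult_left_le_one_le) auto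
      hence nz: "1 - A^2 \<noteq> 0" using Ab by (simp add: power2_eq_square)
      have "real N' * (1 - 3 * A^2) = (real N' - 2 * s') * (1 - A^2)" unfolding A2 using d by (simp add: field_simps)
      thus ?thesis using nz by (simp add: divide_eq_eq)
    qed
    also have "\<alpha>0 - (real N' - 2 * s') = \<omega> * of_int \<nu>' / real N'"
    proof -
      have p: "A0p * real N' - (real N' - 2 * s') * mm * real N' = Wp * of_int \<nu>'"
        unfolding A0p_def Wp_def mm_eq unfolding s0 by (simp add: algebra_simps power2_eq_square)
      have nz: "mm \<noteq> 0" "real N' \<noteq> 0" using mm_pos N0 by auto
      have "A0p / mm - (real N' - 2 * s') = (A0p * real N' - (real N' - 2 * s') * mm * real N') / (mm * real N')"
        using nz by (simp add: field_simps)
      also have "\<dots> = Wp / mm * of_int \<nu>' / real N'" unfolding p using nz by (simp add: field_simps)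
      finally show ?thesis unfolding \<alpha>0_eq \<omega>_eq .
    qed
    finally show ?thesis .
  qed
  show ?thesis unfolding is_N_hump_tw_def
  proof (intro exI conjI allI)
    show "cmod (- complex_of_real A) < 1" using Ab by simp
    show "tw_speed \<alpha>0 N' (- complex_of_real A) * (2 * pi / \<omega>) = 2 * pi * of_int \<nu>' / real N'"
      using \<omega>_pos unfolding c_def[symmetric] c_eq by (simp add: field_simps)
  next
    fix x t
    define \<tau> where "\<tau> = t - t0"
    define y where "y = x - x0"
    define lam where "lam = cis (- (\<omega> * \<tau>))"
    define P where "P = BOpoly N N' \<nu> \<nu>' s s' lam"
    let ?a = "complex_of_real A * lam powi \<nu>'"
    have P_eq: "P = monom 1 N + monom ?a (N - N')"
      by (simp add: P_def BOpoly_def C0 B0)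
    have lp: "lam powi \<nu>' = cis (real N' * (- (c * \<tau>)))"
      unfolding lam_def cis_power_int c_eq using N0 by (simp add: field_simps)
    have tw: "traveling_wave \<alpha>0 N' (- complex_of_real A) y \<tau>
        = \<alpha>0 + (\<Sum>r\<in>{r. r ^ N' = - complex_of_real A * cis (real N' * (- (c * \<tau>)))}. ubeta r y)"
      unfolding traveling_wave_def c_def[symmetric]
      by (simp only: reindex_tw[OF N0, where f="\<lambda>r. ubeta r y" and \<phi>="- (c * \<tau>)" and \<beta>="- complex_of_real A"])
    have P0: "P \<noteq> 0"
    proof
      assume "P = 0"
      hence "coeff P N = 0" by simp
      moreover have "N - N' \<noteq> N" using NN by simp
      ultimately show False by (simp add: P_eq coeff_monom)
    qed
    have pw: "r ^ N = r ^ N' * r ^ (N - N')" for r :: complex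
      using NN by (simp flip: power_add)
    have "root_sum P y = (\<Sum>r\<in>{r. r ^ N' = - complex_of_real A * cis (real N' * (- (c * \<tau>)))}. ubeta r y)"
    proof (cases "A = 0")
      case True
      have "root_sum P y = 0"
        by (rule root_sum_zero_only) (use NN in \<open>simp add: P_eq True poly_monom\<close>)
      moreover have "{r. r ^ N' = - complex_of_real A * cis (real N' * (- (c * \<tau>)))} = {0}"
        using N0 True by auto
      ultimately show ?thesis by simp
    next
      case False
      let ?b = "- complex_of_real A * cis (real N' * (- (c * \<tau>)))"
      have b0: "?b \<noteq> 0" using False by simp
      have a_eq: "?a = - ?b" unfolding lp by simp
      show ?thesis
      proof (rule root_sum_nz[OF P0 N0 b0])
        fix r :: complex assume r0: "r \<noteq> 0"
        have "poly P r = r ^ (N - N') * (r ^ N' - ?b)"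
          by (simp add: P_eq poly_monom pw a_eq lp algebra_simps)
        thus "poly P r = 0 \<longleftrightarrow> r ^ N' = ?b" using r0 by (simp add: eq_neg_iff_add_eq_0)
      next
        fix r :: complex assume r0: "r \<noteq> 0" and pr: "poly P r = 0"
        have rb: "r ^ N' = ?b"
        proof -
          have "poly P r = r ^ (N - N') * (r ^ N' - ?b)"
            by (simp add: P_eq poly_monom pw a_eq lp algebra_simps)
          thus ?thesis using pr r0 by (simp add: eq_neg_iff_add_eq_0)
        qed
        have e1: "r * r ^ (N - 1) = r ^ N" using NN by (simp flip: power_Suc)
        have e2: "r * r ^ (N - N' - 1) = r ^ (N - N')" using NN by (simp flip: power_Suc add: Suc_diff_Suc)
        have "r * poly (pderiv P) r = of_nat N * (r * r ^ (N - 1)) + of_nat (N - N') * ?a * (r * r ^ (N - N' - 1))"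
          by (simp add: P_eq pderiv_add pderiv_monom poly_monom algebra_simps)
        also have "\<dots> = r ^ (N - N') * (of_nat N * r ^ N' + of_nat (N - N') * ?a)"
          unfolding e1 e2 pw by (simp add: algebra_simps)
        also have "of_nat N * r ^ N' + of_nat (N - N') * ?a = of_nat N' * ?b"
          unfolding rb a_eq using NN by (simp add: of_nat_diff algebra_simps)
        finally have "r * poly (pderiv P) r = r ^ (N - N') * of_nat N' * ?b" by simp
        hence "poly (pderiv P) r \<noteq> 0" using r0 b0 N0 by auto
        thus "order r P = 1" by (rule order1_of_pderiv[OF P0 pr])
      qed
    qed
    thus "\<alpha>0 + root_sum (BOpoly N N' \<nu> \<nu>' s s' (cis (- (\<omega> * (t - t0))))) (x - x0)
        = traveling_wave \<alpha>0 N' (- complex_of_real A) (x - x0) (t - t0)"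
      using tw unfolding P_def lam_def \<tau>_def y_def by simp
  qed
qed

end


context bo begin

lemma u_eq_Uf: "(\<lambda>x t. \<alpha>0 + root_sum (BOpoly N N' \<nu> \<nu>' s s' (cis (- (\<omega> * (t - t0))))) (x - x0)) = Uf"
  by (intro ext) (simp add: root_sum_closed Uf_def gg_def)

lemma BO_Uf: "BO_solution Uf"
proof -
  have d1: "deriv (\<lambda>z. Uf z t) = (\<lambda>y. U1f y t)" for t
    by (rule ext) (rule DERIV_imp_deriv[OF Uf_dx])
  have d2: "deriv (\<lambda>y. U1f y t) x = U2f x t" for x t
    by (rule DERIV_imp_deriv[OF U1f_dx])
  have d3: "deriv (\<lambda>\<tau>. Uf x \<tau>) t = Utf x t" for x t
    by (rule DERIV_imp_deriv[OF Uf_dt])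
  have diff: "(f has_real_derivative D) F \<Longrightarrow> f differentiable F" for f D and F :: "real filter"
    unfolding differentiable_def has_field_derivative_def by blast
  show ?thesis unfolding BO_solution_def d1 d2 d3
  proof (intro conjI allI)
    fix x t
    show "(\<lambda>y. Uf y t) differentiable at x" by (rule diff[OF Uf_dx])
    show "(\<lambda>y. U1f y t) differentiable at x" by (rule diff[OF U1f_dx])
    show "(\<lambda>\<tau>. Uf x \<tau>) differentiable at t" by (rule diff[OF Uf_dt])
  next
    fix t
    show "hilbert_transform_of (\<lambda>x. U2f x t) (\<lambda>x. Utf x t + Uf x t * U1f x t)"
      by (rule hilbert_t)
  qed
qed

lemma main_loc:
  fixes m :: int and a0v wv T :: real and u :: "real \<Rightarrow> real \<Rightarrow> real"
  assumes m: "m = int N * \<nu>' - int N' * \<nu>"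
    and a0v: "a0v = (real N ^ 2 * of_int \<nu>' - real N' ^ 2 * of_int \<nu>) / of_int m - 2 * s
                 - 2 * real N' * of_int (\<nu>' - \<nu>) / of_int m * s'"
    and wv: "wv = real N' * (real N - real N') * (real N + 2 * s') / of_int m"
    and T: "T = 2 * pi / wv"
    and u: "u = (\<lambda>x t. a0v + root_sum (BOpoly N N' \<nu> \<nu>' s s' (cis (- (wv * (t - t0))))) (x - x0))"
  shows "(\<forall>lam. cmod lam = 1 \<longrightarrow> (\<forall>z. poly (BOpoly N N' \<nu> \<nu>' s s' lam) z = 0 \<longrightarrow> cmod z < 1))
       \<and> BO_solution u
       \<and> (\<forall>x t. u (x + 2 * pi) t = u x t)
       \<and> (\<forall>x t. u x (t + T) = u x t)
       \<and> (s' = 0 \<longrightarrow> is_N_hump_tw N \<nu> T u)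
       \<and> (s = 0 \<longrightarrow> is_N_hump_tw N' \<nu>' T u)
       \<and> (s = 0 \<and> s' = 0 \<longrightarrow>
            (\<forall>x t. u x t = (real N ^ 2 * of_int \<nu>' - real N' ^ 2 * of_int \<nu>) / of_int m))"
proof -
  have a0e: "a0v = \<alpha>0" unfolding a0v \<alpha>0_def mm_def m ..
  have we: "wv = \<omega>" unfolding wv \<omega>_def mm_def m ..
  have u': "u = (\<lambda>x t. \<alpha>0 + root_sum (BOpoly N N' \<nu> \<nu>' s s' (cis (- (\<omega> * (t - t0))))) (x - x0))"
    unfolding u a0e we ..
  have T': "T = 2 * pi / \<omega>" unfolding T we ..
  show ?thesis
  proof (intro conjI allI impI)
    fix lam z assume "cmod lam = 1" "poly (BOpoly N N' \<nu> \<nu>' s s' lam) z = 0"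
    thus "cmod z < 1" by (rule roots_inside)
  next
    show "BO_solution u" unfolding u' u_eq_Uf by (rule BO_Uf)
  next
    fix x t show "u (x + 2 * pi) t = u x t"
      unfolding u' using root_sum_per[of _ "x - x0"] by (simp add: algebra_simps)
  next
    fix x t
    have "cis (- (\<omega> * (t + T - t0))) = cis (- (\<omega> * (t - t0)))"
    proof -
      have "\<omega> * T = 2 * pi" unfolding T' using \<omega>_pos by simp
      hence "- (\<omega> * (t + T - t0)) = - (\<omega> * (t - t0)) + (- (2 * pi))" by (simp add: algebra_simps)
      thus ?thesis by (simp add: complex_eq_iff cos_diff sin_diff)
    qed
    thus "u x (t + T) = u x t" unfolding u' by simp
  next
    assume "s' = 0" thus "is_N_hump_tw N \<nu> T u" unfolding u' T' by (rule tw_s'0)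
  next
    assume "s = 0" thus "is_N_hump_tw N' \<nu>' T u" unfolding u' T' by (rule tw_s0)
  next
    fix x t assume ss0: "s = 0 \<and> s' = 0"
    have Q0: "Q2 = 0" unfolding Q2_def using ss0 by simp
    have R0: "R2 = 0" unfolding R2_def using ss0 by simp
    have ABC: "A = 0" "B = 0" "C = 0" by (simp_all add: A_eq B_eq C_eq qq_def rr_def Q0 R0)
    have rs: "root_sum (BOpoly N N' \<nu> \<nu>' s s' lam) y = 0" for lam y
      by (rule root_sum_zero_only) (use NN in \<open>simp add: BOpoly_def ABC poly_monom\<close>)
    show "u x t = (real N ^ 2 * of_int \<nu>' - real N' ^ 2 * of_int \<nu>) / of_int m"
      unfolding u rs a0v using ss0 by simp
  qed
qed

end


theorem theorem1:
  fixes N N' :: nat and \<nu> \<nu>' m :: int and s s' x0 t0 \<alpha>0 \<omega> T :: real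
    and u :: "real \<Rightarrow> real \<Rightarrow> real"
  assumes "N > N'" and "N' > 0" and "s \<ge> 0" and "s' \<ge> 0"
    and "m = int N * \<nu>' - int N' * \<nu>" and "m > 0"
    and "\<alpha>0 = (real N ^ 2 * of_int \<nu>' - real N' ^ 2 * of_int \<nu>) / of_int m - 2 * s
                 - 2 * real N' * of_int (\<nu>' - \<nu>) / of_int m * s'"
    and "\<omega> = real N' * (real N - real N') * (real N + 2 * s') / of_int m"
    and "T = 2 * pi / \<omega>"
    and "u = (\<lambda>x t. \<alpha>0 + root_sum (BOpoly N N' \<nu> \<nu>' s s' (cis (- (\<omega> * (t - t0))))) (x - x0))"
  shows "(\<forall>lam. cmod lam = 1 \<longrightarrow> (\<forall>z. poly (BOpoly N N' \<nu> \<nu>' s s' lam) z = 0 \<longrightarrow> cmod z < 1))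
       \<and> BO_solution u
       \<and> (\<forall>x t. u (x + 2 * pi) t = u x t)
       \<and> (\<forall>x t. u x (t + T) = u x t)
       \<and> (s' = 0 \<longrightarrow> is_N_hump_tw N \<nu> T u)
       \<and> (s = 0 \<longrightarrow> is_N_hump_tw N' \<nu>' T u)
       \<and> (s = 0 \<and> s' = 0 \<longrightarrow>
            (\<forall>x t. u x t = (real N ^ 2 * of_int \<nu>' - real N' ^ 2 * of_int \<nu>) / of_int m))"
proof -
  interpret bo N N' \<nu> \<nu>' s s' x0 t0
    by unfold_locales (use assms in auto)
  show ?thesis by (rule main_loc[OF assms(5) assms(7) assms(8) assms(9) assms(10)])
qed

end
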